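(* Let $n\ge1$, $1\le k\le n$, and let $\tau\in\{0,1\}^n$ be a state of the TASEP of size $n$ with exactly $k$ particles (i.e. $k$ letters equal to $1$). Let $\lambda=\lambda(\tau)=(\lambda_1,\ldots,\lambda_k)$ and set $\lambda_{k+1}=0$. Then the stationary probability of $\tau$ is \[ \Pr(\tau)=\frac{\alpha^{k+\lambda_1}\beta^n}{Z_n}\det A^{\alpha,\beta}_{\lambda}, \] where \[ Z_n=(\alpha\beta)^n\sum_{p=1}^n\frac{p}{2n-p}\binom{2n-p}{n}\frac{\alpha^{-p-1}-\beta^{-p-1}}{\alpha^{-1}-\beta^{-1}} \] and $A^{\alpha,\beta}_{\lambda}=(A_{ij})_{1\le i,j\le k}$ with \[ A_{ij}=\left(\binom{\lambda_{j+1}}{j-i+1}+\frac{1}{\beta}\binom{\lambda_{j+1}}{j-i}\right)+\sum_{p=1}^{\lambda_j-\lambda_{j+1}}\left(\frac{1}{\alpha}\right)^p\left(\binom{\lambda_{j+1}+p-1}{j-i}+\frac{1}{\beta}\binom{\lambda_{j+1}+p-1}{j-i-1}\right). \]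
   Context: TASEP: fix $n\ge1$ and parameters $\alpha,\beta\in(0,1]$. States are words $\tau=\tau_1\cdots\tau_n\in\{0,1\}^n$ ($\tau_i=1$ iff site $i$ holds a particle). The discrete-time Markov chain has the following transitions, for arbitrary words $\tau',\tau''$: $0\tau'\to1\tau'$ with probability $\alpha/(n+1)$ (particle enters at site 1); $\tau'1\to\tau'0$ with probability $\beta/(n+1)$ (particle exits at site $n$); $\tau'10\tau''\to\tau'01\tau''$ with probability $1/(n+1)$ (particle hops right); with the remaining probability the state is unchanged. $\Pr(\tau)$ denotes the stationary probability of $\tau$. $\lambda(\tau)=(\lambda_1,\ldots,\lambda_k)$, where $\lambda_i$ is the total number of $0$'s occurring after the $i$-th $1$ in $\tau$. Binomial coefficients satisfy $\binom{m}{r}=0$ if $r<0$ or $r>m$, $\binom{m}{0}=1$; an empty sum is $0$. The quotient $\frac{\alpha^{-p-1}-\beta^{-p-1}}{\alpha^{-1}-\beta^{-1}}$ means the polynomial $\sum_{a=0}^{p}\alpha^{-a}\beta^{-(p-a)}$ (which also covers $\alpha=\beta$). *)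

theory Defs
  imports Complex_Main "Jordan_Normal_Form.Determinant"
begin

text \<open>States of the TASEP of size n: boolean lists of length n (True = particle).\<close>

definition tasep_states :: "nat \<Rightarrow> bool list set" where
  "tasep_states n = {t. length t = n}"

text \<open>The possible moves out of state t, as a list of (resulting state, probability).
  Entering at site 1, exiting at site n, and hops from site i+1 to i+2 (0-based i).\<close>

definition tasep_moves :: "real \<Rightarrow> real \<Rightarrow> bool list \<Rightarrow> (bool list \<times> real) list" where
  "tasep_moves a b t =
     (let n = length t in
       (if n \<ge> 1 \<and> \<not> t ! 0 then [(t[0 := True], a / real (n + 1))] else [])
     @ (if n \<ge> 1 \<and> t ! (n - 1) then [(t[n - 1 := False], b / real (n + 1))] else [])
     @ concat (map (\<lambda>i. if t ! i \<and> \<not> t ! (Suc i)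
                         then [(t[i := False, Suc i := True], 1 / real (n + 1))] else [])
                   [0..<n - 1]))"

definition tasep_P :: "real \<Rightarrow> real \<Rightarrow> bool list \<Rightarrow> bool list \<Rightarrow> real" where
  "tasep_P a b t s =
     sum_list (map snd (filter (\<lambda>m. fst m = s) (tasep_moves a b t)))
     + (if s = t then 1 - sum_list (map snd (tasep_moves a b t)) else 0)"

definition tasep_stationary :: "nat \<Rightarrow> real \<Rightarrow> real \<Rightarrow> (bool list \<Rightarrow> real) \<Rightarrow> bool" where
  "tasep_stationary n a b pr \<longleftrightarrow>
     (\<forall>t\<in>tasep_states n. pr t \<ge> 0) \<and>
     (\<Sum>t\<in>tasep_states n. pr t) = 1 \<and>
     (\<forall>s\<in>tasep_states n. (\<Sum>t\<in>tasep_states n. pr t * tasep_P a b t s) = pr s)"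

text \<open>lambda(t): for the i-th particle, the number of 0's after it (list, in order).\<close>

definition lam_list :: "bool list \<Rightarrow> nat list" where
  "lam_list t = map (\<lambda>j. length (filter Not (drop (Suc j) t)))
                    (filter (\<lambda>j. t ! j) [0..<length t])"

text \<open>1-based access lambda_i, with lambda_i = 0 for i beyond k (in particular lambda_(k+1) = 0).\<close>

definition lam :: "bool list \<Rightarrow> nat \<Rightarrow> nat" where
  "lam t i = (if 1 \<le> i \<and> i \<le> length (lam_list t) then lam_list t ! (i - 1) else 0)"

text \<open>Binomial coefficient with integer lower index: zero for r < 0 (and for r > m).\<close>

definition binz :: "nat \<Rightarrow> int \<Rightarrow> real" where
  "binz m r = (if r < 0 then 0 else real (m choose nat r))"

definition Zn :: "nat \<Rightarrow> real \<Rightarrow> real \<Rightarrow> real" where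
  "Zn n a b = (a * b) ^ n *
     (\<Sum>p=1..n. real p / real (2 * n - p) * real ((2 * n - p) choose n) *
        (\<Sum>c=0..p. (1 / a) ^ c * (1 / b) ^ (p - c)))"

definition A_entry :: "real \<Rightarrow> real \<Rightarrow> bool list \<Rightarrow> nat \<Rightarrow> nat \<Rightarrow> real" where
  "A_entry a b t i j =
     (binz (lam t (j + 1)) (int j - int i + 1) + (1 / b) * binz (lam t (j + 1)) (int j - int i))
     + (\<Sum>p=1..lam t j - lam t (j + 1).
          (1 / a) ^ p * (binz (lam t (j + 1) + p - 1) (int j - int i)
                         + (1 / b) * binz (lam t (j + 1) + p - 1) (int j - int i - 1)))"

definition A_mat :: "real \<Rightarrow> real \<Rightarrow> bool list \<Rightarrow> nat \<Rightarrow> real mat" where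
  "A_mat a b t k = mat k k (\<lambda>(i, j). A_entry a b t (i + 1) (j + 1))"

end

theory Submission
  imports Defs
begin

fun hdet :: "(nat \<Rightarrow> nat \<Rightarrow> real) \<Rightarrow> nat \<Rightarrow> real" where
  "hdet c 0 = 1"
| "hdet c (Suc t) = (\<Sum>s\<le>t. (-1)^(t-s) * c (Suc t) (t-s) * hdet c s)"

lemma det_1x1: "det (mat (Suc 0) (Suc 0) f) = f (0,0)"
  by (subst laplace_expansion_row[of _ 1 0]) (auto simp: cofactor_def mat_delete_def)

lemma hess_gen:
  fixes g :: "nat \<Rightarrow> int \<Rightarrow> real"
  assumes g1: "\<And>j. g j (-1) = 1" and g2: "\<And>j d. d < -1 \<Longrightarrow> g j d = 0"
  shows "det (mat (Suc t) (Suc t) (\<lambda>(i,j). if j = t then v i else g (j+1) (int j - int i)))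
       = (\<Sum>s\<le>t. (-1)^(t-s) * v s * hdet (\<lambda>j d. g j (int d)) s)"
proof (induction t arbitrary: v)
  case 0
  show ?case by (simp add: det_1x1)
next
  case (Suc t)
  let ?M = "mat (Suc (Suc t)) (Suc (Suc t)) (\<lambda>(i,j). if j = Suc t then v i else g (j+1) (int j - int i))"
  let ?c = "\<lambda>j d. g j (int d)"
  have M: "?M \<in> carrier_mat (Suc (Suc t)) (Suc (Suc t))" by simp
  have "det ?M = (\<Sum>j<Suc (Suc t). ?M $$ (Suc t, j) * cofactor ?M (Suc t) j)"
    by (rule laplace_expansion_row[OF M]) simp
  also have "\<dots> = (\<Sum>j\<in>{t, Suc t}. ?M $$ (Suc t, j) * cofactor ?M (Suc t) j)"
  proof (rule sum.mono_neutral_right)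
    show "\<forall>i\<in>{..<Suc (Suc t)} - {t, Suc t}. ?M $$ (Suc t, i) * cofactor ?M (Suc t) i = 0"
      using g2 by auto
  qed auto
  also have "\<dots> = cofactor ?M (Suc t) t + v (Suc t) * cofactor ?M (Suc t) (Suc t)"
    using g1 by simp
  finally have dM: "det ?M = cofactor ?M (Suc t) t + v (Suc t) * cofactor ?M (Suc t) (Suc t)" .
  have d1: "mat_delete ?M (Suc t) t = mat (Suc t) (Suc t) (\<lambda>(i,j). if j = t then v i else g (j+1) (int j - int i))"
    by (rule eq_matI) (auto simp: mat_delete_def)
  have d2: "mat_delete ?M (Suc t) (Suc t) = mat (Suc t) (Suc t) (\<lambda>(i,j). if j = t then g (Suc t) (int t - int i) else g (j+1) (int j - int i))"
    by (rule eq_matI) (auto simp: mat_delete_def)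
  have "det ?M = - (\<Sum>s\<le>t. (-1)^(t-s) * v s * hdet ?c s) + v (Suc t) * (\<Sum>s\<le>t. (-1)^(t-s) * g (Suc t) (int t - int s) * hdet ?c s)"
    unfolding dM cofactor_def d1 d2 Suc.IH by simp
  also have "(\<Sum>s\<le>t. (-1)^(t-s) * g (Suc t) (int t - int s) * hdet ?c s) = hdet ?c (Suc t)"
    by (auto intro!: sum.cong simp: of_nat_diff)
  also have "- (\<Sum>s\<le>t. (-1)^(t-s) * v s * hdet ?c s) = (\<Sum>s\<le>t. (-1)^(Suc t-s) * v s * hdet ?c s)"
    by (auto simp: sum_negf[symmetric] Suc_diff_le intro!: sum.cong)
  finally show ?case by (simp add: algebra_simps)
qed

lemma hess:
  fixes g :: "nat \<Rightarrow> int \<Rightarrow> real"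
  assumes g1: "\<And>j. g j (-1) = 1" and g2: "\<And>j d. d < -1 \<Longrightarrow> g j d = 0"
  shows "det (mat t t (\<lambda>(i,j). g (j+1) (int j - int i))) = hdet (\<lambda>j d. g j (int d)) t"
proof (cases t)
  case 0 thus ?thesis by (simp add: det_dim_zero)
next
  case (Suc t')
  have "mat t t (\<lambda>(i,j). g (j+1) (int j - int i)) = mat (Suc t') (Suc t') (\<lambda>(i,j). if j = t' then g (Suc t') (int t' - int i) else g (j+1) (int j - int i))"
    by (rule eq_matI) (auto simp: Suc)
  also have "det \<dots> = hdet (\<lambda>j d. g j (int d)) t"
    using hess_gen[where g=g and v="\<lambda>i. g (Suc t') (int t' - int i)" and t=t', OF g1 g2] unfolding Suc
    by (auto intro!: sum.cong simp: of_nat_diff)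
  finally show ?thesis .
qed

lemma hdet_cong: "(\<And>j. 1 \<le> j \<Longrightarrow> j \<le> t \<Longrightarrow> c j = c' j) \<Longrightarrow> hdet c t = hdet c' t"
proof (induction t rule: less_induct)
  case (less t)
  show ?case
  proof (cases t)
    case 0 thus ?thesis by simp
  next
    case (Suc t')
    have "hdet c s = hdet c' s" if "s \<le> t'" for s
      using less.IH[of s] less.prems that Suc by auto
    thus ?thesis using less.prems Suc by (auto intro!: sum.cong)
  qed
qed

lemma hdet_shift:
  assumes h0: "\<And>j. 1 \<le> j \<Longrightarrow> j \<le> N \<Longrightarrow> c j 0 = c' j 0 + 1"
    and hS: "\<And>j d. 1 \<le> j \<Longrightarrow> j \<le> N \<Longrightarrow> c j (Suc d) = c' j (Suc d) + c' j d"
  shows "s < N \<Longrightarrow> hdet c (Suc s) = hdet c' (Suc s) + hdet c s"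
proof (induction s rule: less_induct)
  case (less s)
  define P where "P = hdet c"
  have P': "hdet c' u = P u - (if u = 0 then 0 else P (u - 1))" if "u \<le> s" for u
  proof (cases u)
    case 0 thus ?thesis by (simp add: P_def)
  next
    case (Suc u')
    thus ?thesis using less.IH[of u'] less.prems that by (simp add: P_def)
  qed
  let ?c = "c (Suc s)" and ?c' = "c' (Suc s)"
  have A: "hdet c' (Suc s) = (\<Sum>u\<le>s. (-1)^(s-u) * ?c' (s-u) * P u)
      - (\<Sum>u\<le>s. (-1)^(s-u) * ?c' (s-u) * (if u = 0 then 0 else P (u - 1)))"
    by (simp add: P' sum_subtractf[symmetric] algebra_simps)
  have B: "hdet c (Suc s) = (\<Sum>u\<le>s. (-1)^(s-u) * ?c' (s-u) * P u) + P s
       + (\<Sum>u<s. (-1)^(s-u) * ?c' (s - Suc u) * P u)"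
  proof -
    have "hdet c (Suc s) = (\<Sum>u\<le>s. (-1)^(s-u) * ?c (s-u) * P u)" by (simp add: P_def)
    also have "\<dots> = (\<Sum>u\<le>s. (-1)^(s-u) * ?c' (s-u) * P u + (if u = s then P s else (-1)^(s-u) * ?c' (s - Suc u) * P u))"
    proof (rule sum.cong[OF refl])
      fix u assume u: "u \<in> {..s}"
      show "(-1)^(s-u) * ?c (s-u) * P u = (-1)^(s-u) * ?c' (s-u) * P u + (if u = s then P s else (-1)^(s-u) * ?c' (s - Suc u) * P u)"
      proof (cases "u = s")
        case True thus ?thesis using h0[of "Suc s"] less.prems by (simp add: algebra_simps)
      next
        case False
        then have "s - u = Suc (s - Suc u)" using u by auto
        thus ?thesis using hS[of "Suc s" "s - Suc u"] less.prems False by (simp add: algebra_simps)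
      qed
    qed
    also have "\<dots> = (\<Sum>u\<le>s. (-1)^(s-u) * ?c' (s-u) * P u) + (\<Sum>u\<le>s. (if u = s then P s else (-1)^(s-u) * ?c' (s - Suc u) * P u))"
      by (rule sum.distrib)
    also have "(\<Sum>u\<le>s. (if u = s then P s else (-1)^(s-u) * ?c' (s - Suc u) * P u)) = P s + (\<Sum>u<s. (-1)^(s-u) * ?c' (s - Suc u) * P u)"
      by (simp add: lessThan_Suc_atMost[symmetric])
    finally show ?thesis by simp
  qed
  have C: "(\<Sum>u\<le>s. (-1)^(s-u) * ?c' (s-u) * (if u = 0 then 0 else P (u - 1)))
        = - (\<Sum>u<s. (-1)^(s-u) * ?c' (s - Suc u) * P u)"
  proof (cases s)
    case 0 thus ?thesis by simp
  next
    case (Suc s0)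
    have "(\<Sum>u\<le>s. (-1)^(s-u) * ?c' (s-u) * (if u = 0 then 0 else P (u - 1)))
       = (\<Sum>u\<le>s0. (-1)^(s-Suc u) * ?c' (s-Suc u) * P u)"
      unfolding Suc sum.atMost_Suc_shift by simp
    also have "\<dots> = - (\<Sum>u<s. (-1)^(s-u) * ?c' (s - Suc u) * P u)"
      unfolding Suc lessThan_Suc_atMost sum_negf[symmetric]
      by (rule sum.cong) (auto simp: Suc_diff_le)
    finally show ?thesis .
  qed
  show ?case using A B C by (simp add: P_def)
qed

lemma hdet_ext:
  assumes r: "r \<ge> 1"
    and below: "\<And>s. s \<le> r \<Longrightarrow> hdet c s = hdet c' s + (if s = 0 then 0 else \<kappa> * hdet c'' (s-1))"
    and c'eq: "\<And>j. r < j \<Longrightarrow> c' j = c j"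
    and c''eq: "\<And>j. r < j \<Longrightarrow> c'' (j-1) = c j"
  shows "hdet c s = hdet c' s + (if s = 0 then 0 else \<kappa> * hdet c'' (s-1))"
proof (induction s rule: less_induct)
  case (less s)
  show ?case
  proof (cases "s \<le> r")
    case True thus ?thesis by (rule below)
  next
    case False
    then obtain t where s: "s = Suc t" and t: "r \<le> t" by (cases s) auto
    then obtain t1 where t1: "t = Suc t1" using r by (cases t) auto
    define \<gamma> where "\<gamma> u = (if u = 0 then 0 else \<kappa> * hdet c'' (u-1))" for u
    have IH: "hdet c u = hdet c' u + \<gamma> u" if "u \<le> t" for u
      using less.IH[of u] that s \<gamma>_def by auto
    have "hdet c s = (\<Sum>u\<le>t. (-1)^(t-u) * c (Suc t) (t-u) * (hdet c' u + \<gamma> u))"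
      using IH by (simp add: s)
    also have "\<dots> = (\<Sum>u\<le>t. (-1)^(t-u) * c (Suc t) (t-u) * hdet c' u) + (\<Sum>u\<le>t. (-1)^(t-u) * c (Suc t) (t-u) * \<gamma> u)"
      by (simp add: algebra_simps sum.distrib)
    also have "(\<Sum>u\<le>t. (-1)^(t-u) * c (Suc t) (t-u) * hdet c' u) = hdet c' s"
      using c'eq[of "Suc t"] t by (simp add: s)
    also have "(\<Sum>u\<le>t. (-1)^(t-u) * c (Suc t) (t-u) * \<gamma> u) = (\<Sum>u\<le>t1. (-1)^(t1-u) * c (Suc t) (t1-u) * (\<kappa> * hdet c'' u))"
      unfolding t1 sum.atMost_Suc_shift by (simp add: \<gamma>_def)
    also have "\<dots> = \<kappa> * hdet c'' t"
      using c''eq[of "Suc t"] t unfolding t1 by (simp add: sum_distrib_left algebra_simps)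
    finally show ?thesis by (simp add: s)
  qed
qed

lemma hdet_base:
  assumes r1: "r1 = Suc r2"
    and low: "\<And>s. 1 \<le> s \<Longrightarrow> s \<le> r1 \<Longrightarrow> hdet c s = hdet c' s + hdet c (s-1)"
    and c''eq: "\<And>j. 1 \<le> j \<Longrightarrow> j < r1 \<Longrightarrow> c'' j = c j"
    and d0: "c (Suc r1) 0 = c' (Suc r1) 0 + \<delta>"
    and dS: "\<And>d. c (Suc r1) (Suc d) - c' (Suc r1) (Suc d) - c' (Suc r1) d + c'' r1 d - \<delta> * c r1 d = 0"
  shows "hdet c (Suc r1) = hdet c' (Suc r1) + hdet c'' r1"
proof -
  define P where "P = hdet c"
  have P': "hdet c' u = P u - (if u = 0 then 0 else P (u - 1))" if "u \<le> r1" for u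
    using low[of u] that by (cases u) (auto simp: P_def)
  have P'': "hdet c'' u = P u" if "u \<le> r2" for u
    unfolding P_def by (rule hdet_cong) (use c''eq that r1 in auto)
  let ?c = "c (Suc r1)" and ?c' = "c' (Suc r1)"
  have E1: "hdet c (Suc r1) = \<delta> * P r1 + (\<Sum>u\<le>r1. (-1)^(r1-u) * ?c' (r1-u) * P u)
        + (\<Sum>u\<le>r2. (-1)^(r1-u) * (?c (r1-u) - ?c' (r1 - u)) * P u)"
  proof -
    have "hdet c (Suc r1) = (\<Sum>u\<le>r1. (-1)^(r1-u) * ?c' (r1-u) * P u) + (\<Sum>u\<le>r1. (-1)^(r1-u) * (?c (r1-u) - ?c' (r1 - u)) * P u)"
      by (simp add: P_def sum.distrib[symmetric] algebra_simps)
    also have "(\<Sum>u\<le>r1. (-1)^(r1-u) * (?c (r1-u) - ?c' (r1 - u)) * P u) = \<delta> * P r1 + (\<Sum>u\<le>r2. (-1)^(r1-u) * (?c (r1-u) - ?c' (r1 - u)) * P u)"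
      unfolding r1 sum.atMost_Suc using d0 r1 by simp
    finally show ?thesis by simp
  qed
  have E2: "hdet c' (Suc r1) = (\<Sum>u\<le>r1. (-1)^(r1-u) * ?c' (r1-u) * P u) - (\<Sum>u\<le>r2. (-1)^(r2-u) * ?c' (r2-u) * P u)"
  proof -
    have "hdet c' (Suc r1) = (\<Sum>u\<le>r1. (-1)^(r1-u) * ?c' (r1-u) * P u) - (\<Sum>u\<le>r1. (-1)^(r1-u) * ?c' (r1-u) * (if u = 0 then 0 else P (u - 1)))"
      by (simp add: P' sum_subtractf[symmetric] algebra_simps)
    also have "(\<Sum>u\<le>r1. (-1)^(r1-u) * ?c' (r1-u) * (if u = 0 then 0 else P (u - 1))) = (\<Sum>u\<le>r2. (-1)^(r2-u) * ?c' (r2-u) * P u)"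
      unfolding r1 sum.atMost_Suc_shift by simp
    finally show ?thesis by simp
  qed
  have E3: "hdet c'' r1 = (\<Sum>u\<le>r2. (-1)^(r2-u) * c'' r1 (r2-u) * P u)"
    using P'' by (simp add: r1)
  have E4: "P r1 = (\<Sum>u\<le>r2. (-1)^(r2-u) * c r1 (r2-u) * P u)"
    by (simp add: P_def r1)
  have key: "(\<Sum>u\<le>r2. (-1)^(r1-u) * (?c (r1-u) - ?c' (r1 - u)) * P u) + \<delta> * P r1
     + (\<Sum>u\<le>r2. (-1)^(r2-u) * ?c' (r2-u) * P u) - hdet c'' r1 = 0"
  proof -
    have "(\<Sum>u\<le>r2. (-1)^(r1-u) * (?c (r1-u) - ?c' (r1 - u)) * P u) + \<delta> * P r1
     + (\<Sum>u\<le>r2. (-1)^(r2-u) * ?c' (r2-u) * P u) - hdet c'' r1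
      = - (\<Sum>u\<le>r2. (-1)^(r2-u) * P u * (?c (Suc (r2-u)) - ?c' (Suc (r2-u)) - ?c' (r2-u) + c'' r1 (r2-u) - \<delta> * c r1 (r2 - u)))"
      unfolding E3 E4 sum_negf[symmetric] sum_distrib_left sum_subtractf[symmetric] sum.distrib[symmetric]
      by (rule sum.cong) (auto simp: r1 Suc_diff_le algebra_simps)
    also have "\<dots> = 0" using dS by simp
    finally show ?thesis .
  qed
  show ?thesis using E1 E2 key by simp
qed

definition Tz :: "real \<Rightarrow> nat \<Rightarrow> int \<Rightarrow> real" where
  "Tz b w d = binz w d + b * binz w (d - 1)"

definition Fz :: "real \<Rightarrow> real \<Rightarrow> nat \<Rightarrow> nat \<Rightarrow> int \<Rightarrow> real" where
  "Fz a b u v d = binz v (d + 1) + b * binz v d + (\<Sum>p=1..u-v. a^p * Tz b (v + p - 1) d)"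

lemma binz_neg[simp]: "d < 0 \<Longrightarrow> binz w d = 0" by (simp add: binz_def)
lemma binz_0[simp]: "binz w 0 = 1" by (simp add: binz_def)

lemma binz_zero: "binz 0 d = (if d = 0 then 1 else 0)"
  by (auto simp: binz_def)

lemma binz_pascal: "binz (Suc w) d = binz w d + binz w (d - 1)"
proof (cases "d \<le> 0")
  case True thus ?thesis by (cases "d = 0") (auto simp: binz_def)
next
  case False
  then have "nat d = Suc (nat (d - 1))" by auto
  thus ?thesis using False by (simp add: binz_def)
qed

lemma Tz_pascal: "Tz b (Suc w) d = Tz b w d + Tz b w (d - 1)"
  by (simp add: Tz_def binz_pascal algebra_simps)

lemma Tz_0: "Tz b w 0 = 1" by (simp add: Tz_def)

lemma Fz_m1: "Fz a b u v (-1) = 1"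
  by (simp add: Fz_def Tz_def)

lemma Fz_neg: "d < -1 \<Longrightarrow> Fz a b u v d = 0"
  by (simp add: Fz_def Tz_def)

lemma Fz_pascal: "Fz a b u (Suc v) d = Fz a b (u - 1) v d + Fz a b (u - 1) v (d - 1)"
proof -
  have "u - Suc v = u - 1 - v" by simp
  moreover have "Tz b (Suc v + p - 1) d = Tz b (v + p - 1) d + Tz b (v + p - 1) (d - 1)" if "p \<ge> 1" for p
    using Tz_pascal[of b "v + p - 1" d] that by (simp add: Suc_diff_le)
  ultimately show ?thesis
    unfolding Fz_def binz_pascal[of v]
    by (simp add: algebra_simps sum.distrib)
qed

lemma Fz_diff:
  assumes "m \<ge> 1"
  shows "Fz a b (v + m) v d = Fz a b (v + m - 1) v d + a^m * Tz b (v + m - 1) d"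
proof -
  have "{1..m} = insert m {1..m-1}" using assms by auto
  then have "(\<Sum>p=1..m. a^p * Tz b (v + p - 1) d) = a^m * Tz b (v + m - 1) d + (\<Sum>p=1..m-1. a^p * Tz b (v + p - 1) d)"
    using assms by (simp add: sum.insert)
  moreover have "v + m - v = m" "v + m - 1 - v = m - 1" by auto
  ultimately show ?thesis unfolding Fz_def by (simp add: algebra_simps)
qed

lemma Fz_ident:
  assumes "m \<ge> 1"
  shows "a^m * Tz b (v + m - 1) (d + 1) - Fz a b (v + m - 1) v d + Fz a b (v + m + m') v d
         - a^m * Fz a b (v + m + m') (v + m) d = 0"
proof -
  have split: "{1..m+m'} = {1..m-1} \<union> {m..m+m'}" using assms by auto
  have S1: "(\<Sum>p=1..m+m'. a^p * Tz b (v + p - 1) d) = (\<Sum>p=1..m-1. a^p * Tz b (v + p - 1) d) + (\<Sum>p=m..m+m'. a^p * Tz b (v + p - 1) d)"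
    unfolding split by (rule sum.union_disjoint) auto
  have S2: "(\<Sum>p=m..m+m'. a^p * Tz b (v + p - 1) d) = a^m * Tz b (v + m - 1) d + (\<Sum>p=Suc m..m+m'. a^p * Tz b (v + p - 1) d)"
    by (subst sum.atLeast_Suc_atMost) auto
  have S3: "(\<Sum>p=Suc m..m+m'. a^p * Tz b (v + p - 1) d) = a^m * (\<Sum>p=1..m'. a^p * Tz b (v + m + p - 1) d)"
  proof -
    have "(\<Sum>p=Suc m..m+m'. a^p * Tz b (v + p - 1) d) = (\<Sum>p=1..m'. a^(p+m) * Tz b (v + (p+m) - 1) d)"
      using sum.shift_bounds_cl_nat_ivl[of "\<lambda>p. a^p * Tz b (v + p - 1) d" 1 m m'] by (simp add: add.commute)
    also have "\<dots> = a^m * (\<Sum>p=1..m'. a^p * Tz b (v + m + p - 1) d)"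
      by (simp add: sum_distrib_left power_add algebra_simps)
    finally show ?thesis .
  qed
  have P: "Tz b (v + m) (d + 1) = Tz b (v + m - 1) (d + 1) + Tz b (v + m - 1) d"
    using Tz_pascal[of b "v + m - 1" "d+1"] assms by simp
  have "v + m + m' - v = m + m'" "v + m - 1 - v = m - 1" "v + m + m' - (v + m) = m'" by auto
  then show ?thesis
    unfolding Fz_def using S1 S2 S3 P
    by (simp add: Tz_def algebra_simps)
qed

definition colf :: "real \<Rightarrow> real \<Rightarrow> (nat \<Rightarrow> nat) \<Rightarrow> nat \<Rightarrow> nat \<Rightarrow> real" where
  "colf a b f j d = Fz a b (f j) (f (Suc j)) (int d)"

lemma hdet_snoc:
  assumes "f (Suc k) = 0" "f (Suc (Suc k)) = 0"
  shows "hdet (colf a b f) (Suc k) = b * hdet (colf a b f) k"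
proof -
  have "hdet (colf a b f) (Suc k) = (\<Sum>u\<le>k. if u = k then b * hdet (colf a b f) k else 0)"
    unfolding hdet.simps by (rule sum.cong) (auto simp: colf_def Fz_def assms binz_zero)
  thus ?thesis by simp
qed

lemma hdet_bulk:
  assumes r: "r \<ge> 1" and k: "k \<ge> r"
    and f1: "\<And>j. 1 \<le> j \<Longrightarrow> j \<le> r \<Longrightarrow> f j = Suc (f' j)"
    and f2: "\<And>j. r < j \<Longrightarrow> f' j = f j"
    and f3: "\<And>j. j < r \<Longrightarrow> f'' j = f j"
    and f4: "\<And>j. r \<le> j \<Longrightarrow> f'' j = f (Suc j)"
    and mpos: "f r > f (Suc r)"
    and dec: "r \<ge> 2 \<Longrightarrow> f (r - 1) \<ge> f r"
    and \<kappa>: "\<kappa> = (if r = 1 then a^(f 1 - f 2) else 1)"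
  shows "hdet (colf a b f) k = hdet (colf a b f') k + \<kappa> * hdet (colf a b f'') (k - 1)"
proof -
  let ?c = "colf a b f" and ?c' = "colf a b f'" and ?c'' = "colf a b f''"
  have low: "hdet ?c (Suc s) = hdet ?c' (Suc s) + hdet ?c s" if "s < r - 1" for s
  proof (rule hdet_shift[where N = "r - 1"])
    fix j assume j: "1 \<le> j" "j \<le> r - 1"
    then have e: "f j = Suc (f' j)" "f (Suc j) = Suc (f' (Suc j))" using f1 by auto
    show "?c j 0 = ?c' j 0 + 1"
      unfolding colf_def e Fz_pascal by (simp add: Fz_m1)
    fix d
    show "?c j (Suc d) = ?c' j (Suc d) + ?c' j d"
      unfolding colf_def e Fz_pascal by simp
  qed (use that in auto)
  have below: "hdet ?c s = hdet ?c' s + (if s = 0 then 0 else \<kappa> * hdet ?c'' (s-1))" if "s \<le> r" for s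
  proof (cases "s = 0")
    case True thus ?thesis by simp
  next
    case s0: False
    show ?thesis
    proof (cases "s < r")
      case True
      then have r2: "r \<ge> 2" using s0 by auto
      have "hdet ?c'' (s-1) = hdet ?c (s-1)"
        by (rule hdet_cong) (use True in \<open>auto simp: colf_def f3\<close>)
      moreover have "hdet ?c s = hdet ?c' s + hdet ?c (s-1)"
        using low[of "s-1"] True s0 by (cases s) auto
      ultimately show ?thesis using r2 \<kappa> s0 by simp
    next
      case False
      then have s: "s = r" using that by auto
      show ?thesis
      proof (cases "r = 1")
        case True
        define v where "v = f 2"
        define m where "m = f 1 - f 2"
        have fm: "f 1 = v + m" "m \<ge> 1" using mpos True by (auto simp: v_def m_def numeral_2_eq_2)
        have "f' 1 = v + m - 1" "f' 2 = v" using f1[of 1] f2[of 2] True fm by (auto simp: v_def)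
        then show ?thesis using s True \<kappa> Fz_diff[OF fm(2), of a b v 0] fm
          by (simp add: colf_def Tz_0 m_def v_def numeral_2_eq_2)
      next
        case False
        then have r2: "r \<ge> 2" using r by auto
        define r2' where "r2' = r - 2"
        have rr: "r = Suc (Suc r2')" using r2 by (simp add: r2'_def)
        define v where "v = f (Suc r)"
        define m where "m = f r - f (Suc r)"
        define m' where "m' = f (r - 1) - f r"
        have fm: "f r = v + m" "m \<ge> 1" "f (r - 1) = v + m + m'"
          using mpos dec r2 by (auto simp: v_def m_def m'_def)
        have e1: "f' r = v + m - 1" "f' (Suc r) = v" using f1[of r] f2[of "Suc r"] r fm by (auto simp: v_def)
        have e2: "f'' (r - 1) = v + m + m'" "f'' r = v" using f3[of "r-1"] f4[of r] r fm by (auto simp: v_def)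
        have "hdet ?c (Suc (r - 1)) = hdet ?c' (Suc (r - 1)) + hdet ?c'' (r - 1)"
        proof (rule hdet_base[where \<delta> = "a^m"])
          show "r - 1 = Suc r2'" using rr by simp
          show "hdet ?c s = hdet ?c' s + hdet ?c (s - 1)" if "1 \<le> s" "s \<le> r - 1" for s
            using low[of "s - 1"] that by (cases s) auto
          show "?c'' j = ?c j" if "1 \<le> j" "j < r - 1" for j
            using that by (auto simp: colf_def f3)
          show "?c (Suc (r - 1)) 0 = ?c' (Suc (r - 1)) 0 + a^m"
            using Fz_diff[OF fm(2), of a b v 0] r2 fm e1 by (simp add: colf_def Tz_0 Suc_diff_le v_def)
          fix d
          have "Suc (r - 1) = r" using r2 by simp
          moreover have "Suc (r - 1 ) = r" using r2 by simp
          ultimately show "?c (Suc (r - 1)) (Suc d) - ?c' (Suc (r - 1)) (Suc d) - ?c' (Suc (r - 1)) d + ?c'' (r - 1) d - a^m * ?c (r - 1) d = 0"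
            using Fz_ident[OF fm(2), of a b v "int d" m'] Fz_diff[OF fm(2), of a b v "int d + 1"] fm e1 e2
            by (simp add: colf_def v_def algebra_simps)
        qed
        then show ?thesis using s r2 \<kappa> by simp
      qed
    qed
  qed
  have "hdet ?c k = hdet ?c' k + (if k = 0 then 0 else \<kappa> * hdet ?c'' (k-1))"
  proof (rule hdet_ext[OF r below])
    show "?c' j = ?c j" if "r < j" for j using that by (auto simp: colf_def f2 fun_eq_iff)
    show "?c'' (j - 1) = ?c j" if "r < j" for j using that by (auto simp: colf_def f4 fun_eq_iff)
  qed
  thus ?thesis using r k by simp
qed

definition zeros :: "bool list \<Rightarrow> nat" where "zeros w = length (filter Not w)"
definition npart :: "bool list \<Rightarrow> nat" where "npart w = length (filter (\<lambda>x. x) w)"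
definition lead :: "bool list \<Rightarrow> nat" where "lead w = length (takeWhile Not w)"

definition G :: "real \<Rightarrow> real \<Rightarrow> bool list \<Rightarrow> real" where
  "G a b w = a ^ lead w * hdet (colf a b (lam w)) (npart w)"

lemma lam_list_Nil[simp]: "lam_list [] = []"
  by (simp add: lam_list_def)

lemma lam_list_Cons: "lam_list (x # w) = (if x then [zeros w] else []) @ lam_list w"
proof -
  have u: "[0..<Suc (length w)] = 0 # map Suc [0..<length w]"
    by (simp add: upt_conv_Cons map_Suc_upt del: upt_Suc)
  show ?thesis
    unfolding lam_list_def zeros_def
    by (simp add: u filter_map o_def del: upt_Suc)
qed

lemma lam_list_True[simp]: "lam_list (True # w) = zeros w # lam_list w"
  by (simp add: lam_list_Cons)
lemma lam_list_False[simp]: "lam_list (False # w) = lam_list w"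
  by (simp add: lam_list_Cons)

lemma zeros_simps[simp]: "zeros [] = 0" "zeros (True # w) = zeros w" "zeros (False # w) = Suc (zeros w)"
  "zeros (X @ Y) = zeros X + zeros Y"
  by (auto simp: zeros_def)
lemma npart_simps[simp]: "npart [] = 0" "npart (True # w) = Suc (npart w)" "npart (False # w) = npart w"
  "npart (X @ Y) = npart X + npart Y"
  by (auto simp: npart_def)

lemma length_lam_list[simp]: "length (lam_list w) = npart w"
  by (induction w) (auto simp: lam_list_Cons)

lemma lam_list_append: "lam_list (X @ Y) = map (\<lambda>l. l + zeros Y) (lam_list X) @ lam_list Y"
  by (induction X) (auto simp: lam_list_Cons)

lemma zeros_Cons_ge: "zeros w \<le> zeros (x # w)"
  by (cases x) auto

lemma lam_list_le: "l \<in> set (lam_list w) \<Longrightarrow> l \<le> zeros w"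
proof (induction w)
  case (Cons x w) thus ?case using zeros_Cons_ge[of w x] by (cases x) auto
qed simp

lemma lead_lam: "lead w + lam w 1 = zeros w"
proof (induction w)
  case Nil thus ?case by (simp add: lead_def lam_def)
next
  case (Cons x w)
  show ?case
  proof (cases x)
    case True thus ?thesis by (simp add: lead_def lam_def)
  next
    case False
    have "lam (False # w) 1 = lam w 1" by (simp add: lam_def)
    thus ?thesis using Cons False by (simp add: lead_def)
  qed
qed

lemma lead_Cons_F[simp]: "lead (False # w) = Suc (lead w)" by (simp add: lead_def)
lemma lead_Cons_T[simp]: "lead (True # w) = 0" by (simp add: lead_def)

lemma lead_append: "lead (X @ Y) = (if True \<in> set X then lead X else length X + lead Y)"
proof -
  have "(\<forall>x\<in>set X. \<not> x) \<longleftrightarrow> True \<notin> set X" by auto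
  thus ?thesis by (auto simp: lead_def takeWhile_append)
qed

lemma G_Cons_F: "G a b (False # w) = a * G a b w"
proof -
  have "lam (False # w) = lam w" by (simp add: lam_def fun_eq_iff)
  thus ?thesis by (simp add: G_def)
qed

lemma G_Nil: "G a b [] = 1"
  by (simp add: G_def lead_def)

lemma G_snoc_T: "G a b (w @ [True]) = b * G a b w"
proof -
  have ll: "lam_list (w @ [True]) = lam_list w @ [0]"
    by (simp add: lam_list_append)
  have l: "lam (w @ [True]) = lam w"
    by (auto simp: lam_def fun_eq_iff ll nth_append)
  have "lead (w @ [True]) = lead w"
  proof (cases "True \<in> set w")
    case False
    then have "takeWhile Not w = w" by (auto simp: takeWhile_eq_all_conv)
    moreover have "lead (w @ [True]) = length w + lead [True]" using False by (simp add: lead_append)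
    ultimately show ?thesis by (simp add: lead_def del: takeWhile_eq_all_conv)
  qed (simp add: lead_append)
  moreover have "hdet (colf a b (lam w)) (Suc (npart w)) = b * hdet (colf a b (lam w)) (npart w)"
    by (rule hdet_snoc) (auto simp: lam_def)
  ultimately show ?thesis by (simp add: G_def l)
qed

lemma G_bulk: "G a b (X @ True # False # Y) = G a b (X @ True # Y) + G a b (X @ False # Y)"
proof -
  define LX where "LX = lam_list X"
  define LY where "LY = lam_list Y"
  define z where "z = zeros Y"
  define p where "p = npart X"
  have lenLX: "length LX = p" by (simp add: LX_def p_def)
  define f where "f = lam (X @ True # False # Y)"
  define f' where "f' = lam (X @ True # Y)"
  define f'' where "f'' = lam (X @ False # Y)"
  have L: "lam_list (X @ True # False # Y) = map (\<lambda>l. l + Suc z) LX @ Suc z # LY"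
    by (simp add: lam_list_append LX_def LY_def z_def)
  have L': "lam_list (X @ True # Y) = map (\<lambda>l. l + z) LX @ z # LY"
    by (simp add: lam_list_append LX_def LY_def z_def)
  have L'': "lam_list (X @ False # Y) = map (\<lambda>l. l + Suc z) LX @ LY"
    by (simp add: lam_list_append LX_def LY_def z_def)
  have fv: "f j = (if 1 \<le> j \<and> j \<le> p then LX ! (j - 1) + Suc z else if j = Suc p then Suc z
      else if Suc p < j \<and> j \<le> Suc p + length LY then LY ! (j - Suc (Suc p)) else 0)" for j
    unfolding f_def lam_def L using lenLX
    by (auto simp: nth_append nth_Cons' Suc_diff_Suc)
  have fv': "f' j = (if 1 \<le> j \<and> j \<le> p then LX ! (j - 1) + z else if j = Suc p then z
      else if Suc p < j \<and> j \<le> Suc p + length LY then LY ! (j - Suc (Suc p)) else 0)" for j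
    unfolding f'_def lam_def L' using lenLX
    by (auto simp: nth_append nth_Cons' Suc_diff_Suc)
  have fv'': "f'' j = (if 1 \<le> j \<and> j \<le> p then LX ! (j - 1) + Suc z
      else if p < j \<and> j \<le> p + length LY then LY ! (j - Suc p) else 0)" for j
    unfolding f''_def lam_def L'' using lenLX
    by (auto simp: nth_append)
  define k where "k = npart (X @ True # False # Y)"
  have k: "k = Suc p + npart Y" by (simp add: k_def p_def)
  have LYle: "LY ! 0 \<le> z" if "LY \<noteq> []"
    by (metis LY_def z_def length_greater_0_conv nth_mem lam_list_le that)
  have hd: "hdet (colf a b f) k = hdet (colf a b f') k + (if Suc p = 1 then a^(f 1 - f 2) else 1) * hdet (colf a b f'') (k - 1)"
  proof (rule hdet_bulk[where r = "Suc p"])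
    show "Suc p \<le> k" by (simp add: k)
    show "f j = Suc (f' j)" if "1 \<le> j" "j \<le> Suc p" for j using that by (simp add: fv fv')
    show "f' j = f j" if "Suc p < j" for j using that by (simp add: fv fv')
    show "f'' j = f j" if "j < Suc p" for j using that by (simp add: fv fv'')
    show "f'' j = f (Suc j)" if "Suc p \<le> j" for j using that by (auto simp: fv fv'')
    show "f (Suc (Suc p)) < f (Suc p)" using LYle by (cases "LY = []") (auto simp: fv)
    show "f (Suc p - 1) \<ge> f (Suc p)" if "2 \<le> Suc p" using that by (auto simp: fv)
  qed auto
  have np: "npart (X @ True # Y) = k" "npart (X @ False # Y) = k - 1" by (auto simp: k p_def)
  show ?thesis
  proof (cases "True \<in> set X")
    case True
    then have "p \<noteq> 0" by (auto simp: p_def npart_def filter_empty_conv)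
    then show ?thesis using hd True unfolding G_def f_def f'_def f''_def k_def np
      by (simp add: lead_append algebra_simps)
  next
    case False
    then have p0: "p = 0" by (auto simp: p_def npart_def filter_empty_conv)
    have f12: "f 1 - f 2 = Suc (lead Y)"
    proof -
      have "f 2 = lam Y 1" using p0 by (auto simp: fv lam_def LY_def numeral_2_eq_2)
      moreover have "f 1 = Suc z" using p0 by (simp add: fv)
      ultimately show ?thesis using lead_lam[of Y] by (simp add: z_def)
    qed
    have hd': "hdet (colf a b f) k = hdet (colf a b f') k + a^(Suc (lead Y)) * hdet (colf a b f'') (k - 1)"
      using hd p0 f12 by simp
    show ?thesis using hd' False p0 unfolding G_def f_def f'_def f''_def k_def np
      by (simp add: lead_append algebra_simps power_add del: hdet.simps)
  qed
qed

lemma exists_TF: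
  "j < length w \<Longrightarrow> w ! j \<Longrightarrow> \<not> last w \<Longrightarrow> \<exists>X Y. w = X @ True # False # Y"
proof (induction w arbitrary: j)
  case Nil thus ?case by simp
next
  case (Cons x w)
  show ?case
  proof (cases "w = []")
    case True thus ?thesis using Cons.prems by auto
  next
    case wne: False
    then have lw: "\<not> last w" using Cons.prems by simp
    show ?thesis
    proof (cases x)
      case True
      show ?thesis
      proof (cases "hd w")
        case hF: False
        have "w = False # tl w" using hF wne by (metis list.collapse)
        then have "x # w = [] @ True # False # tl w" using True by simp
        thus ?thesis by blast
      next
        case hT: True
        then have "w ! 0" using wne by (simp add: hd_conv_nth)
        then obtain X Y where "w = X @ True # False # Y" using Cons.IH[of 0] wne lw by auto
        then have "x # w = (x # X) @ True # False # Y" by simp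
        thus ?thesis by blast
      qed
    next
      case False
      then have "j \<noteq> 0" using Cons.prems by (cases j) auto
      then have "w ! (j - 1)" "j - 1 < length w" using Cons.prems by (cases j; auto)+
      then obtain X Y where "w = X @ True # False # Y" using Cons.IH[of "j - 1"] lw by auto
      then have "x # w = (x # X) @ True # False # Y" by simp
      thus ?thesis by blast
    qed
  qed
qed

lemma G_pos:
  assumes a: "0 < a" and b: "0 < b"
  shows "0 < G a b w"
proof (induction "length w" arbitrary: w rule: less_induct)
  case less
  show ?case
  proof (cases w)
    case Nil thus ?thesis by (simp add: G_Nil)
  next
    case (Cons x w')
    show ?thesis
    proof (cases x)
      case False
      thus ?thesis using less[of w'] Cons a by (simp add: G_Cons_F)
    next
      case xT: True
      show ?thesis
      proof (cases "last w")
        case True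
        then have "w = butlast w @ [True]" using Cons by (metis append_butlast_last_id list.distinct(1))
        moreover have "0 < G a b (butlast w)" using less[of "butlast w"] Cons by simp
        ultimately show ?thesis using b by (metis G_snoc_T mult_pos_pos)
      next
        case False
        then obtain X Y where w: "w = X @ True # False # Y"
          using exists_TF[of 0 w] Cons xT by auto
        have "0 < G a b (X @ True # Y)" "0 < G a b (X @ False # Y)" using less w by auto
        thus ?thesis unfolding w G_bulk by simp
      qed
    qed
  qed
qed

lemma G_rep_T: "G a b (replicate m True) = b ^ m"
proof (induction m)
  case 0 thus ?case by (simp add: G_Nil)
next
  case (Suc m)
  have "replicate (Suc m) True = replicate m True @ [True]" by (simp add: replicate_append_same)
  thus ?case using Suc by (simp add: G_snoc_T)
qed

lemma G_rep_F: "G a b (replicate m True @ False # w) = (\<Sum>s=1..m. G a b (replicate s True @ w)) + a * G a b w"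
proof (induction m)
  case 0 thus ?case by (simp add: G_Cons_F)
next
  case (Suc m)
  have "replicate (Suc m) True @ False # w = replicate m True @ True # False # w"
    by (simp add: replicate_append_same[symmetric])
  moreover have "replicate m True @ True # w = replicate (Suc m) True @ w"
    by (simp add: replicate_append_same[symmetric])
  ultimately show ?case using Suc by (simp add: G_bulk)
qed

fun rho :: "real \<Rightarrow> real \<Rightarrow> nat \<Rightarrow> bool list \<Rightarrow> real" where
  "rho a b 0 w = G a b w"
| "rho a b (Suc p) w = G a b (replicate (Suc p) True @ w) + a * rho a b p w"

lemma rho_step: "rho a b p (True # w) + rho a b p (False # w) = (\<Sum>q=1..Suc p. rho a b q w)"
proof (induction p)
  case 0 thus ?case by (simp add: G_Cons_F)
next
  case (Suc p)
  have e1: "replicate (Suc p) True @ True # w = replicate (Suc (Suc p)) True @ w"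
    by (simp add: replicate_append_same[symmetric])
  have "(\<Sum>q=1..Suc (Suc p). rho a b q w) = (\<Sum>q=0..Suc p. rho a b (Suc q) w)"
    using sum.shift_bounds_cl_Suc_ivl[of "\<lambda>q. rho a b q w" 0 "Suc p"] by simp
  also have "\<dots> = (\<Sum>q=0..Suc p. G a b (replicate (Suc q) True @ w)) + a * (\<Sum>q=0..Suc p. rho a b q w)"
    by (simp only: rho.simps sum.distrib sum_distrib_left)
  also have "(\<Sum>q=0..Suc p. G a b (replicate (Suc q) True @ w)) = (\<Sum>s=1..Suc (Suc p). G a b (replicate s True @ w))"
    using sum.shift_bounds_cl_Suc_ivl[of "\<lambda>s. G a b (replicate s True @ w)" 0 "Suc p"] by simp
  also have "(\<Sum>q=0..Suc p. rho a b q w) = G a b w + (\<Sum>q=1..Suc p. rho a b q w)"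
    by (simp add: sum.atLeast_Suc_atMost[of 0])
  finally have R: "(\<Sum>q=1..Suc (Suc p). rho a b q w) = (\<Sum>s=1..Suc (Suc p). G a b (replicate s True @ w)) + a * (G a b w + (\<Sum>q=1..Suc p. rho a b q w))" .
  show ?case
    unfolding R rho.simps(2) e1 G_rep_F Suc.IH[symmetric] distrib_left sum_distrib_left
    by (simp add: algebra_simps)
qed

definition Mop :: "(nat \<Rightarrow> real) \<Rightarrow> nat \<Rightarrow> real" where
  "Mop R p = (\<Sum>q=1..Suc p. R q)"

lemma sum_len_Suc:
  "(\<Sum>w\<in>{w. length w = Suc n}. f w) = (\<Sum>w\<in>{w. length w = n}. f (True # w)) + (\<Sum>w\<in>{w. length w = n}. f (False # w))"
proof -
  let ?A = "{w :: bool list. length w = n}"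
  have e: "{w. length w = Suc n} = Cons True ` ?A \<union> Cons False ` ?A"
  proof
    show "{w. length w = Suc n} \<subseteq> Cons True ` ?A \<union> Cons False ` ?A"
    proof
      fix w :: "bool list" assume "w \<in> {w. length w = Suc n}"
      then obtain x w' where "w = x # w'" "length w' = n" by (cases w) auto
      thus "w \<in> Cons True ` ?A \<union> Cons False ` ?A" by (cases x) auto
    qed
  qed auto
  show ?thesis unfolding e
    by (subst sum.union_disjoint) (auto simp: sum.reindex finite_list_length)
qed

lemma Phi_eq: "(\<Sum>w\<in>{w. length w = n}. rho a b p w) = ((Mop ^^ n) (\<lambda>q. rho a b q [])) p"
proof (induction n arbitrary: p)
  case 0
  have "{w :: bool list. length w = 0} = {[]}" by auto
  thus ?case by simp
next
  case (Suc n)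
  have "(\<Sum>w\<in>{w. length w = Suc n}. rho a b p w) = (\<Sum>w\<in>{w. length w = n}. \<Sum>q=1..Suc p. rho a b q w)"
    by (simp add: sum_len_Suc sum.distrib[symmetric] rho_step)
  also have "\<dots> = (\<Sum>q=1..Suc p. \<Sum>w\<in>{w. length w = n}. rho a b q w)"
    by (rule sum.swap)
  finally show ?case by (simp add: Suc.IH Mop_def)
qed

fun bb :: "nat \<Rightarrow> nat \<Rightarrow> real" where
  "bb 0 q = (if q = 0 then 1 else 0)"
| "bb (Suc n) q = (if q = 0 then 0 else (\<Sum>r=q-1..n. bb n r))"

lemma swap_tri:
  "(\<Sum>q\<le>n. \<Sum>r=1..Suc q. h q r) = (\<Sum>r=1..Suc n. \<Sum>q=r-1..n. h q r)"
proof -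
  have e1: "{r\<in>{1..Suc n}. r \<le> Suc q} = {1..Suc q}" if "q \<le> n" for q using that by auto
  have e2: "{q\<in>{..n}. r \<le> Suc q} = {r-1..n}" if "r \<in> {1..Suc n}" for r using that by auto
  have "(\<Sum>q\<le>n. \<Sum>r=1..Suc q. h q r) = (\<Sum>q\<in>{..n}. \<Sum>r\<in>{r\<in>{1..Suc n}. r \<le> Suc q}. h q r)"
    by (rule sum.cong) (metis e1 atMost_iff)+
  also have "\<dots> = (\<Sum>r\<in>{1..Suc n}. \<Sum>q\<in>{q\<in>{..n}. r \<le> Suc q}. h q r)"
    by (rule sum.swap_restrict) auto
  also have "\<dots> = (\<Sum>r=1..Suc n. \<Sum>q=r-1..n. h q r)"
    by (rule sum.cong) (metis e2)+
  finally show ?thesis .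
qed

lemma Mop_pow: "((Mop ^^ n) R) 0 = (\<Sum>q\<le>n. bb n q * R q)"
proof (induction n arbitrary: R)
  case 0 thus ?case by simp
next
  case (Suc n)
  have "((Mop ^^ Suc n) R) 0 = ((Mop ^^ n) (Mop R)) 0" by (simp only: funpow_Suc_right o_apply)
  also have "\<dots> = (\<Sum>q\<le>n. bb n q * (\<Sum>r=1..Suc q. R r))" by (simp add: Suc.IH Mop_def)
  also have "\<dots> = (\<Sum>r=1..Suc n. \<Sum>q=r-1..n. bb n q * R r)"
    unfolding sum_distrib_left by (rule swap_tri)
  also have "\<dots> = (\<Sum>r\<in>{1..Suc n}. bb (Suc n) r * R r)"
    by (rule sum.cong) (auto simp: sum_distrib_right)
  also have "\<dots> = (\<Sum>r\<le>Suc n. bb (Suc n) r * R r)"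
    by (rule sum.mono_neutral_left) auto
  finally show ?case .
qed

definition Bc :: "nat \<Rightarrow> nat \<Rightarrow> real" where
  "Bc n q = (if 1 \<le> q \<and> q \<le> n then real q / real (2*n - q) * real ((2*n - q) choose n) else 0)"

lemma BI:
  assumes q: "1 \<le> q" "q \<le> n"
  shows "Bc (Suc n) q = Bc (Suc n) (Suc q) + Bc n (q - 1)"
proof -
  define N where "N = 2*n + 1 - q"
  have N1: "2 * Suc n - q = Suc N" "2 * Suc n - Suc q = N" "2 * n - (q - 1) = N" using q by (auto simp: N_def)
  have Nge: "N \<ge> Suc n" using q by (simp add: N_def)
  define x where "x = real (N choose n)"
  define y where "y = real (N choose Suc n)"
  define z where "z = real (Suc N choose Suc n)"
  have h1: "z * (n+1) = (N+1) * x"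
    using Suc_times_binomial[of n N] unfolding x_def z_def by (simp add: algebra_simps flip: of_nat_mult)
  have h2: "z = x + y" unfolding x_def y_def z_def by simp
  have h3: "real N = 2 * real n + 1 - real q" using q by (simp add: N_def of_nat_diff)
  have Npos: "real N > 0" using Nge by simp
  have lhs: "Bc (Suc n) q = real q / (real N + 1) * z" using q unfolding Bc_def N1 z_def by (simp del: binomial_Suc_Suc)
  have r1: "Bc (Suc n) (Suc q) = (real q + 1) / real N * y" using q unfolding Bc_def N1 y_def by (simp del: binomial_Suc_Suc)
  have r2: "Bc n (q - 1) = (real q - 1) / real N * x"
  proof (cases "q = 1")
    case True thus ?thesis by (simp add: Bc_def)
  next
    case False then have "1 \<le> q - 1" "q - 1 \<le> n" using q by auto
    then show ?thesis using q unfolding Bc_def N1 x_def by (simp add: of_nat_diff)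
  qed
  have key: "real q * z * real N = (real N + 1) * ((real q + 1) * y + (real q - 1) * x)"
  proof -
    have "real q * z * real N - (real N + 1) * ((real q + 1) * y + (real q - 1) * x)
        = - z * (real N + real q - 2 * real n - 1) + 2 * ((real N + 1) * x - z * (real n + 1))"
      using h2 by (simp add: algebra_simps)
    also have "\<dots> = 0"
    proof -
      have "real N + real q - 2 * real n - 1 = 0" using h3 by simp
      moreover have "(real N + 1) * x - z * (real n + 1) = 0" using h1 by (simp add: algebra_simps)
      ultimately show ?thesis by simp
    qed
    finally show ?thesis by simp
  qed
  have nz: "real N \<noteq> 0" "real N + 1 \<noteq> 0" using Npos by auto
  have e1: "real q / (real N + 1) * z = (real q * z) / (real N + 1)" by simp
  have e2: "(real q + 1) / real N * y + (real q - 1) / real N * x = ((real q + 1) * y + (real q - 1) * x) / real N"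
    by (simp add: add_divide_distrib diff_divide_distrib algebra_simps)
  have "(real q * z) / (real N + 1) = ((real q + 1) * y + (real q - 1) * x) / real N"
    using nz key by (simp add: frac_eq_eq algebra_simps)
  thus ?thesis unfolding lhs r1 r2 e1 e2 .
qed

lemma PS:
  assumes n: "n \<ge> 1"
  shows "j \<le> n \<Longrightarrow> (\<Sum>r=n-j..n. Bc n r) = Bc (Suc n) (Suc n - j)"
proof (induction j)
  case 0
  have "2 * n - n = n" by simp
  thus ?case using n by (simp add: Bc_def)
next
  case (Suc j)
  have "{n - Suc j..n} = insert (n - Suc j) {n - j..n}" using Suc.prems by auto
  then have "(\<Sum>r=n-Suc j..n. Bc n r) = Bc n (n - Suc j) + (\<Sum>r=n-j..n. Bc n r)"
    using Suc.prems by (simp add: sum.insert)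
  also have "\<dots> = Bc n (n - Suc j) + Bc (Suc n) (Suc n - j)" using Suc by simp
  also have "\<dots> = Bc (Suc n) (n - j)"
    using BI[of "n - j" n] Suc.prems by (simp add: Suc_diff_le)
  finally show ?case by (simp add: Suc_diff_le)
qed

lemma bb_closed: "n \<ge> 1 \<Longrightarrow> bb n q = Bc n q"
proof (induction n arbitrary: q rule: nat_induct_at_least)
  case base
  show ?case by (cases q) (auto simp: Bc_def)
next
  case (Suc n)
  show ?case
  proof (cases "q = 0")
    case True thus ?thesis by (simp add: Bc_def)
  next
    case q0: False
    show ?thesis
    proof (cases "q \<le> Suc n")
      case True
      have "bb (Suc n) q = (\<Sum>r=n - (Suc n - q)..n. Bc n r)"
        using q0 True Suc.IH by (simp add: Suc_diff_le)
      also have "\<dots> = Bc (Suc n) q" using PS[of n "Suc n - q"] Suc.hyps q0 True by simp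
      finally show ?thesis .
    next
      case False thus ?thesis by (simp add: Bc_def)
    qed
  qed
qed

lemma sum_list_filter_concat:
  "sum_list (map snd (filter P (concat (map (\<lambda>i. if C i then [(u i, p)] else []) xs))))
   = sum_list (map (\<lambda>i. if C i \<and> P (u i, p) then p else 0) xs)"
  by (induction xs) auto

lemma sum_list_concat:
  "sum_list (map snd (concat (map (\<lambda>i. if C i then [(u i, p)] else []) xs)))
   = sum_list (map (\<lambda>i. if C i then p else 0) xs)"
  by (induction xs) auto

lemma sum_list_upt0: "sum_list (map f [0..<m]) = (\<Sum>i<m. f i)"
  by (simp add: interv_sum_list_conv_sum_set_nat atLeast0LessThan)

definition hopC :: "bool list \<Rightarrow> nat \<Rightarrow> bool" where
  "hopC t i \<longleftrightarrow> t ! i \<and> \<not> t ! Suc i"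

lemma moves_in:
  assumes "length t = n"
  shows "sum_list (map snd (filter (\<lambda>m. fst m = s) (tasep_moves a b t))) =
    (if n \<ge> 1 \<and> \<not> t ! 0 \<and> t[0 := True] = s then a / real (n + 1) else 0)
  + (if n \<ge> 1 \<and> t ! (n - 1) \<and> t[n - 1 := False] = s then b / real (n + 1) else 0)
  + (\<Sum>i<n - 1. if hopC t i \<and> t[i := False, Suc i := True] = s then 1 / real (n + 1) else 0)"
  unfolding tasep_moves_def Let_def assms hopC_def
  by (simp add: sum_list_filter_concat sum_list_upt0)

lemma moves_out:
  assumes "length t = n"
  shows "sum_list (map snd (tasep_moves a b t)) =
    (if n \<ge> 1 \<and> \<not> t ! 0 then a / real (n + 1) else 0)
  + (if n \<ge> 1 \<and> t ! (n - 1) then b / real (n + 1) else 0)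
  + (\<Sum>i<n - 1. if hopC t i then 1 / real (n + 1) else 0)"
  unfolding tasep_moves_def Let_def assms hopC_def
  by (simp add: sum_list_concat sum_list_upt0)

lemma upd_same: "xs ! i = v \<Longrightarrow> xs[i := v] = xs"
  by (metis list_update_id)

lemma cond_enter:
  assumes "length t = n" "length s = n" "n \<ge> 1"
  shows "(\<not> t ! 0 \<and> t[0 := True] = s) \<longleftrightarrow> (s ! 0 \<and> t = s[0 := False])"
proof
  assume H: "\<not> t ! 0 \<and> t[0 := True] = s"
  have tn: "t \<noteq> []" using assms by auto
  then have "s ! 0" using H by auto
  moreover have "s[0 := False] = t" using H upd_same[of t 0 False] by auto
  ultimately show "s ! 0 \<and> t = s[0 := False]" by simp
next
  assume H: "s ! 0 \<and> t = s[0 := False]"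
  have sn: "s \<noteq> []" using assms by auto
  then have "\<not> t ! 0" using H by auto
  moreover have "t[0 := True] = s" using H upd_same[of s 0 True] by auto
  ultimately show "\<not> t ! 0 \<and> t[0 := True] = s" by simp
qed

lemma cond_exit:
  assumes "length t = n" "length s = n" "n \<ge> 1"
  shows "(t ! (n - 1) \<and> t[n - 1 := False] = s) \<longleftrightarrow> (\<not> s ! (n - 1) \<and> t = s[n - 1 := True])"
proof
  assume H: "t ! (n - 1) \<and> t[n - 1 := False] = s"
  then have "\<not> s ! (n - 1)" using assms by auto
  moreover have "s[n - 1 := True] = t" using H upd_same[of t "n - 1" True] by auto
  ultimately show "\<not> s ! (n - 1) \<and> t = s[n - 1 := True]" by simp
next
  assume H: "\<not> s ! (n - 1) \<and> t = s[n - 1 := True]"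
  then have "t ! (n - 1)" using assms by auto
  moreover have "t[n - 1 := False] = s" using H upd_same[of s "n - 1" False] by auto
  ultimately show "t ! (n - 1) \<and> t[n - 1 := False] = s" by simp
qed

lemma cond_hop:
  assumes "length t = n" "length s = n" "Suc i < n"
  shows "(hopC t i \<and> t[i := False, Suc i := True] = s) \<longleftrightarrow> (\<not> s ! i \<and> s ! Suc i \<and> t = s[i := True, Suc i := False])"
proof
  assume H: "hopC t i \<and> t[i := False, Suc i := True] = s"
  then have "\<not> s ! i" "s ! Suc i" using assms by (auto simp: hopC_def nth_list_update)
  moreover have "s[i := True, Suc i := False] = t"
  proof -
    have "s[i := True, Suc i := False] = t[i := False, Suc i := True, i := True, Suc i := False]" using H by simp
    also have "\<dots> = t[Suc i := True, i := True, Suc i := False]" by (simp add: list_update_swap)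
    also have "\<dots> = t[i := True, Suc i := False]" by (metis list_update_overwrite list_update_swap n_not_Suc_n)
    also have "\<dots> = t" using H upd_same[of t i True] upd_same[of t "Suc i" False] by (simp add: hopC_def)
    finally show ?thesis .
  qed
  ultimately show "\<not> s ! i \<and> s ! Suc i \<and> t = s[i := True, Suc i := False]" by simp
next
  assume H: "\<not> s ! i \<and> s ! Suc i \<and> t = s[i := True, Suc i := False]"
  then have "hopC t i" using assms by (auto simp: hopC_def nth_list_update)
  moreover have "t[i := False, Suc i := True] = s"
  proof -
    have "t[i := False, Suc i := True] = s[i := True, Suc i := False, i := False, Suc i := True]" using H by simp
    also have "\<dots> = s[Suc i := False, i := False, Suc i := True]" by (simp add: list_update_swap)
    also have "\<dots> = s[i := False, Suc i := True]" by (metis list_update_overwrite list_update_swap n_not_Suc_n)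
    also have "\<dots> = s" using H upd_same[of s i False] upd_same[of s "Suc i" True] by simp
    finally show ?thesis .
  qed
  ultimately show "hopC t i \<and> t[i := False, Suc i := True] = s" by simp
qed

definition hh :: "real \<Rightarrow> real \<Rightarrow> bool list \<Rightarrow> nat \<Rightarrow> real" where
  "hh a b s i = (if s ! i then 1 else -1) * G a b (take i s @ drop (Suc i) s)"

lemma flux_enter:
  assumes "s \<noteq> []" "\<alpha> > 0"
  shows "(if s ! 0 then G (1/\<alpha>) b (s[0 := False]) * \<alpha> else 0) - (if \<not> s ! 0 then \<alpha> * G (1/\<alpha>) b s else 0)
     = hh (1/\<alpha>) b s 0"
proof -
  obtain x s' where s: "s = x # s'" using assms by (cases s) auto
  show ?thesis using assms(2) unfolding s hh_def
    by (cases x) (auto simp: G_Cons_F)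
qed

lemma flux_exit:
  assumes "s \<noteq> []" "\<beta> > 0" "length s = n"
  shows "(if \<not> s ! (n - 1) then \<beta> * G a (1/\<beta>) (s[n - 1 := True]) else 0) - (if s ! (n - 1) then \<beta> * G a (1/\<beta>) s else 0)
     = - hh a (1/\<beta>) s (n - 1)"
proof -
  obtain x s' where s: "s = s' @ [x]" using assms by (cases s rule: rev_cases) auto
  have n: "n - 1 = length s'" using assms s by simp
  show ?thesis using assms(2) unfolding s hh_def n
    by (cases x) (auto simp: G_snoc_T list_update_append)
qed

lemma flux_hop:
  assumes "Suc i < length s"
  shows "(if \<not> s ! i \<and> s ! Suc i then G a b (s[i := True, Suc i := False]) else 0) - (if hopC s i then G a b s else 0)
     = hh a b s (Suc i) - hh a b s i"
proof -
  define X where "X = take i s"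
  define Y where "Y = drop (Suc (Suc i)) s"
  define x where "x = s ! i"
  define y where "y = s ! Suc i"
  have d: "drop (Suc i) s = y # Y" using assms by (simp add: Y_def y_def Cons_nth_drop_Suc)
  have s: "s = X @ x # y # Y"
    using id_take_nth_drop[of i s] assms d unfolding X_def x_def by simp
  have lX: "length X = i" using assms by (simp add: X_def)
  have e1: "s[i := True, Suc i := False] = X @ True # False # Y"
    unfolding s using lX by (simp add: list_update_append)
  have e2: "take i s @ drop (Suc i) s = X @ y # Y" unfolding s using lX by simp
  have e3: "take (Suc i) s @ drop (Suc (Suc i)) s = X @ x # Y" unfolding s using lX by simp
  have sx: "s ! i = x" "s ! Suc i = y" unfolding s using lX by (auto simp: nth_append)
  show ?thesis unfolding hh_def e1 e2 e3 sx hopC_def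
    unfolding s by (cases x; cases y) (auto simp: G_bulk)
qed

lemma flux_total:
  assumes "length s = n" "n \<ge> 1" "\<alpha> > 0" "\<beta> > 0"
  defines "q \<equiv> G (1/\<alpha>) (1/\<beta>)"
  shows "(if s ! 0 then q (s[0 := False]) * \<alpha> else 0)
       + (if \<not> s ! (n - 1) then \<beta> * q (s[n - 1 := True]) else 0)
       + (\<Sum>i<n - 1. if \<not> s ! i \<and> s ! Suc i then q (s[i := True, Suc i := False]) else 0)
     = (if \<not> s ! 0 then \<alpha> * q s else 0) + (if s ! (n - 1) then \<beta> * q s else 0)
       + (\<Sum>i<n - 1. if hopC s i then q s else 0)"
proof -
  let ?h = "hh (1/\<alpha>) (1/\<beta>) s"
  have sne: "s \<noteq> []" using assms by auto
  have E: "(if s ! 0 then q (s[0 := False]) * \<alpha> else 0) - (if \<not> s ! 0 then \<alpha> * q s else 0) = ?h 0"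
    unfolding q_def by (rule flux_enter[OF sne assms(3)])
  have X: "(if \<not> s ! (n - 1) then \<beta> * q (s[n - 1 := True]) else 0) - (if s ! (n - 1) then \<beta> * q s else 0) = - ?h (n - 1)"
    unfolding q_def by (rule flux_exit[OF sne assms(4) assms(1)])
  have H: "(\<Sum>i<n - 1. (if \<not> s ! i \<and> s ! Suc i then q (s[i := True, Suc i := False]) else 0) - (if hopC s i then q s else 0))
      = ?h (n - 1) - ?h 0"
  proof -
    have "(\<Sum>i<n - 1. (if \<not> s ! i \<and> s ! Suc i then q (s[i := True, Suc i := False]) else 0) - (if hopC s i then q s else 0))
       = (\<Sum>i<n - 1. ?h (Suc i) - ?h i)"
      unfolding q_def by (rule sum.cong[OF refl], rule flux_hop) (use assms in auto)
    also have "\<dots> = ?h (n - 1) - ?h 0" by (rule sum_lessThan_telescope)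
    finally show ?thesis .
  qed
  show ?thesis using E X H by (simp add: sum_subtractf algebra_simps)
qed

lemma sum_delta_c:
  fixes f :: "'a \<Rightarrow> real"
  assumes "finite A" "t0 \<in> A"
  shows "(\<Sum>t\<in>A. f t * (if c \<and> t = t0 then p else 0)) = (if c then f t0 * p else 0)"
proof -
  have "(\<Sum>t\<in>A. f t * (if c \<and> t = t0 then p else 0)) = (\<Sum>t\<in>A. if t = t0 then (if c then f t * p else 0) else 0)"
    by (rule sum.cong) auto
  also have "\<dots> = (if c then f t0 * p else 0)" using assms by (simp add: sum.delta)
  finally show ?thesis .
qed

lemma sum_delta_c2:
  fixes f :: "'a \<Rightarrow> real"
  assumes "finite A" "t0 \<in> A"
  shows "(\<Sum>t\<in>A. f t * (if c1 \<and> c2 \<and> t = t0 then p else 0)) = (if c1 \<and> c2 then f t0 * p else 0)"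
  using sum_delta_c[OF assms, of f "c1 \<and> c2" p] by simp

lemma in_rewrite:
  assumes "length t = n" "length s = n" "n \<ge> 1"
  shows "sum_list (map snd (filter (\<lambda>m. fst m = s) (tasep_moves \<alpha> \<beta> t))) =
    (if s ! 0 \<and> t = s[0 := False] then \<alpha> / real (n + 1) else 0)
  + (if \<not> s ! (n - 1) \<and> t = s[n - 1 := True] then \<beta> / real (n + 1) else 0)
  + (\<Sum>i<n - 1. if \<not> s ! i \<and> s ! Suc i \<and> t = s[i := True, Suc i := False] then 1 / real (n + 1) else 0)"
proof -
  have h: "(\<Sum>i<n - 1. if hopC t i \<and> t[i := False, Suc i := True] = s then 1 / real (n + 1) else 0)
     = (\<Sum>i<n - 1. if \<not> s ! i \<and> s ! Suc i \<and> t = s[i := True, Suc i := False] then 1 / real (n + 1) else 0)"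
    by (rule sum.cong[OF refl]) (use cond_hop[OF assms(1,2)] in auto)
  show ?thesis unfolding moves_in[OF assms(1)] h
    using cond_enter[OF assms] cond_exit[OF assms] assms(3) by auto
qed

lemma balance:
  assumes "length s = n" "n \<ge> 1" "\<alpha> > 0" "\<beta> > 0"
  defines "q \<equiv> G (1/\<alpha>) (1/\<beta>)"
  shows "(\<Sum>t\<in>tasep_states n. q t * tasep_P \<alpha> \<beta> t s) = q s"
proof -
  let ?S = "tasep_states n"
  define e where "e = 1 / real (n + 1)"
  have fin: "finite ?S" by (simp add: tasep_states_def finite_list_length)
  have sS: "s \<in> ?S" using assms by (simp add: tasep_states_def)
  let ?inn = "\<lambda>t. sum_list (map snd (filter (\<lambda>m. fst m = s) (tasep_moves \<alpha> \<beta> t)))"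
  let ?out = "\<lambda>t. sum_list (map snd (tasep_moves \<alpha> \<beta> t))"
  have "(\<Sum>t\<in>?S. q t * tasep_P \<alpha> \<beta> t s) = (\<Sum>t\<in>?S. q t * ?inn t) + (\<Sum>t\<in>?S. if t = s then q t * (1 - ?out t) else 0)"
    unfolding tasep_P_def by (simp add: sum.distrib[symmetric] algebra_simps) (rule sum.cong, auto)
  also have "(\<Sum>t\<in>?S. if t = s then q t * (1 - ?out t) else 0) = q s * (1 - ?out s)"
    using fin sS by (simp add: sum.delta)
  also have "(\<Sum>t\<in>?S. q t * ?inn t) =
      (\<Sum>t\<in>?S. q t * (if s ! 0 \<and> t = s[0 := False] then \<alpha> * e else 0))
    + (\<Sum>t\<in>?S. q t * (if \<not> s ! (n - 1) \<and> t = s[n - 1 := True] then \<beta> * e else 0))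
    + (\<Sum>i<n - 1. \<Sum>t\<in>?S. q t * (if \<not> s ! i \<and> s ! Suc i \<and> t = s[i := True, Suc i := False] then e else 0))"
  proof -
    have "(\<Sum>t\<in>?S. q t * ?inn t) = (\<Sum>t\<in>?S.
        q t * (if s ! 0 \<and> t = s[0 := False] then \<alpha> * e else 0)
      + q t * (if \<not> s ! (n - 1) \<and> t = s[n - 1 := True] then \<beta> * e else 0)
      + (\<Sum>i<n - 1. q t * (if \<not> s ! i \<and> s ! Suc i \<and> t = s[i := True, Suc i := False] then e else 0)))"
    proof (rule sum.cong[OF refl])
      fix t assume "t \<in> ?S"
      then have lt: "length t = n" by (simp add: tasep_states_def)
      show "q t * ?inn t = q t * (if s ! 0 \<and> t = s[0 := False] then \<alpha> * e else 0)
      + q t * (if \<not> s ! (n - 1) \<and> t = s[n - 1 := True] then \<beta> * e else 0)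
      + (\<Sum>i<n - 1. q t * (if \<not> s ! i \<and> s ! Suc i \<and> t = s[i := True, Suc i := False] then e else 0))"
        unfolding in_rewrite[OF lt assms(1,2)] e_def
        by (simp add: distrib_left sum_distrib_left)
    qed
    then show ?thesis
      by (simp add: sum.distrib sum.swap[of _ ?S])
  qed
  also have "(\<Sum>t\<in>?S. q t * (if s ! 0 \<and> t = s[0 := False] then \<alpha> * e else 0)) = (if s ! 0 then q (s[0 := False]) * (\<alpha> * e) else 0)"
    by (rule sum_delta_c[OF fin]) (use assms in \<open>simp add: tasep_states_def\<close>)
  also have "(\<Sum>t\<in>?S. q t * (if \<not> s ! (n - 1) \<and> t = s[n - 1 := True] then \<beta> * e else 0)) = (if \<not> s ! (n - 1) then q (s[n - 1 := True]) * (\<beta> * e) else 0)"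
    by (rule sum_delta_c[OF fin]) (use assms in \<open>simp add: tasep_states_def\<close>)
  also have "(\<Sum>i<n - 1. \<Sum>t\<in>?S. q t * (if \<not> s ! i \<and> s ! Suc i \<and> t = s[i := True, Suc i := False] then e else 0))
      = (\<Sum>i<n - 1. if \<not> s ! i \<and> s ! Suc i then q (s[i := True, Suc i := False]) * e else 0)"
    by (rule sum.cong[OF refl], rule sum_delta_c2[OF fin]) (use assms in \<open>simp add: tasep_states_def\<close>)
  also have "?out s = (if \<not> s ! 0 then \<alpha> * e else 0) + (if s ! (n - 1) then \<beta> * e else 0) + (\<Sum>i<n - 1. if hopC s i then e else 0)"
    unfolding moves_out[OF assms(1)] e_def using assms(2) by simp
  finally have L: "(\<Sum>t\<in>?S. q t * tasep_P \<alpha> \<beta> t s) =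
      (if s ! 0 then q (s[0 := False]) * (\<alpha> * e) else 0) + (if \<not> s ! (n - 1) then q (s[n - 1 := True]) * (\<beta> * e) else 0)
      + (\<Sum>i<n - 1. if \<not> s ! i \<and> s ! Suc i then q (s[i := True, Suc i := False]) * e else 0)
      + q s * (1 - ((if \<not> s ! 0 then \<alpha> * e else 0) + (if s ! (n - 1) then \<beta> * e else 0) + (\<Sum>i<n - 1. if hopC s i then e else 0)))" .
  have F: "((if s ! 0 then q (s[0 := False]) * \<alpha> else 0)
       + (if \<not> s ! (n - 1) then \<beta> * q (s[n - 1 := True]) else 0)
       + (\<Sum>i<n - 1. if \<not> s ! i \<and> s ! Suc i then q (s[i := True, Suc i := False]) else 0)) * e
     = ((if \<not> s ! 0 then \<alpha> * q s else 0) + (if s ! (n - 1) then \<beta> * q s else 0)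
       + (\<Sum>i<n - 1. if hopC s i then q s else 0)) * e"
    using flux_total[OF assms(1-4)] unfolding q_def by simp
  have F2: "(if s ! 0 then q (s[0 := False]) * (\<alpha> * e) else 0) + (if \<not> s ! (n - 1) then q (s[n - 1 := True]) * (\<beta> * e) else 0)
      + (\<Sum>i<n - 1. if \<not> s ! i \<and> s ! Suc i then q (s[i := True, Suc i := False]) * e else 0)
     = q s * ((if \<not> s ! 0 then \<alpha> * e else 0) + (if s ! (n - 1) then \<beta> * e else 0) + (\<Sum>i<n - 1. if hopC s i then e else 0))"
  proof -
    have h1: "(if s ! 0 then q (s[0 := False]) * (\<alpha> * e) else 0) = (if s ! 0 then q (s[0 := False]) * \<alpha> else 0) * e" by simp
    have h2: "(if \<not> s ! (n - 1) then q (s[n - 1 := True]) * (\<beta> * e) else 0) = (if \<not> s ! (n - 1) then \<beta> * q (s[n - 1 := True]) else 0) * e" by simp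
    have h3: "(\<Sum>i<n - 1. if \<not> s ! i \<and> s ! Suc i then q (s[i := True, Suc i := False]) * e else 0)
       = (\<Sum>i<n - 1. if \<not> s ! i \<and> s ! Suc i then q (s[i := True, Suc i := False]) else 0) * e"
      unfolding sum_distrib_right by (rule sum.cong) auto
    have h4: "q s * ((if \<not> s ! 0 then \<alpha> * e else 0) + (if s ! (n - 1) then \<beta> * e else 0) + (\<Sum>i<n - 1. if hopC s i then e else 0))
      = ((if \<not> s ! 0 then \<alpha> * q s else 0) + (if s ! (n - 1) then \<beta> * q s else 0)
       + (\<Sum>i<n - 1. if hopC s i then q s else 0)) * e"
    proof -
      have "q s * (\<Sum>i<n - 1. if hopC s i then e else 0) = (\<Sum>i<n - 1. if hopC s i then q s else 0) * e"
        unfolding sum_distrib_right sum_distrib_left by (rule sum.cong) auto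
      thus ?thesis by (simp add: distrib_left distrib_right)
    qed
    show ?thesis unfolding h1 h2 h3 h4 distrib_right[symmetric] by (rule F)
  qed
  show ?thesis unfolding L F2 by (simp add: algebra_simps)
qed

lemma mem_le_sum_list: "(\<forall>x\<in>set xs. (0::real) \<le> x) \<Longrightarrow> y \<in> set xs \<Longrightarrow> y \<le> sum_list xs"
  by (induction xs) (auto simp: sum_list_nonneg add_increasing2 add_increasing)

definition stp :: "bool list \<Rightarrow> bool list \<Rightarrow> bool" where
  "stp t u \<longleftrightarrow> (\<exists>p. (u, p) \<in> set (tasep_moves 1 1 t))"

lemma moves_fst: "map fst (tasep_moves a b t) = map fst (tasep_moves 1 1 t)"
  by (simp add: tasep_moves_def Let_def map_concat o_def if_distrib cong: if_cong)

lemma stp_moves: "stp t u \<Longrightarrow> \<exists>p. (u, p) \<in> set (tasep_moves a b t)"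
proof -
  assume "stp t u"
  then obtain p where "(u, p) \<in> set (tasep_moves 1 1 t)" unfolding stp_def by blast
  then have "u \<in> set (map fst (tasep_moves 1 1 t))" by (metis fst_conv image_eqI list.set_map)
  moreover have "set (map fst (tasep_moves a b t)) = set (map fst (tasep_moves 1 1 t))"
    by (rule arg_cong[OF moves_fst])
  ultimately have "u \<in> set (map fst (tasep_moves a b t))" by simp
  then obtain m where "m \<in> set (tasep_moves a b t)" "u = fst m" by (metis imageE list.set_map)
  thus ?thesis by (metis prod.collapse)
qed

lemma moves_pos: "a > 0 \<Longrightarrow> b > 0 \<Longrightarrow> m \<in> set (tasep_moves a b t) \<Longrightarrow> snd m > 0"
  by (auto simp: tasep_moves_def Let_def split: if_splits)

lemma moves_len: "m \<in> set (tasep_moves a b t) \<Longrightarrow> length (fst m) = length t"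
  by (auto simp: tasep_moves_def Let_def split: if_splits)

lemma stp_len: "stp t u \<Longrightarrow> length u = length t"
  unfolding stp_def using moves_len by fastforce

lemma stp_enter: "stp (False # w) (True # w)"
proof -
  let ?t = "False # w"
  have "(True # w, 1 / real (length ?t + 1)) \<in> set (if length ?t \<ge> 1 \<and> \<not> ?t ! 0 then [(?t[0 := True], 1 / real (length ?t + 1))] else [])"
    by simp
  thus ?thesis unfolding stp_def tasep_moves_def Let_def set_append by blast
qed

lemma stp_exit: "stp (w @ [True]) (w @ [False])"
proof -
  let ?t = "w @ [True]"
  have "(w @ [False], 1 / real (length ?t + 1)) \<in> set (if length ?t \<ge> 1 \<and> ?t ! (length ?t - 1) then [(?t[length ?t - 1 := False], 1 / real (length ?t + 1))] else [])"
    by (simp add: nth_append list_update_append)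
  thus ?thesis unfolding stp_def tasep_moves_def Let_def set_append by blast
qed

lemma stp_hop: "stp (X @ True # False # Y) (X @ False # True # Y)"
proof -
  let ?t = "X @ True # False # Y"
  have i: "length X \<in> set [0..<length ?t - 1]" by simp
  have c: "?t ! length X \<and> \<not> ?t ! Suc (length X)" by (simp add: nth_append)
  have u: "?t[length X := False, Suc (length X) := True] = X @ False # True # Y" by (simp add: list_update_append)
  have "(X @ False # True # Y, 1 / real (length ?t + 1)) \<in> set (concat (map (\<lambda>i. if ?t ! i \<and> \<not> ?t ! Suc i
                         then [(?t[i := False, Suc i := True], 1 / real (length ?t + 1))] else []) [0..<length ?t - 1]))"
    using i c u by (auto intro!: bexI[of _ "length X"])
  thus ?thesis unfolding stp_def tasep_moves_def Let_def set_append by (intro exI UnI2)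
qed

fun pot :: "bool list \<Rightarrow> nat" where
  "pot [] = 0"
| "pot (x # w) = (if x then Suc (length w) else 0) + pot w"

lemma pot_append: "pot (X @ Y) = pot X + npart X * length Y + pot Y"
  by (induction X) auto

lemma reach_zero: "length w = n \<Longrightarrow> stp\<^sup>*\<^sup>* w (replicate n False)"
proof (induction "pot w" arbitrary: w rule: less_induct)
  case less
  show ?case
  proof (cases "True \<in> set w")
    case False
    then have "w = replicate n False" using less.prems
      by (metis (full_types) replicate_length_same)
    thus ?thesis by simp
  next
    case True
    show ?thesis
    proof (cases "last w")
      case lT: True
      have wne: "w \<noteq> []" using True by auto
      define w' where "w' = butlast w"
      have w: "w = w' @ [True]" using wne lT unfolding w'_def by (metis append_butlast_last_id)
      have "pot (w' @ [False]) < pot w" unfolding w by (simp add: pot_append)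
      moreover have "length (w' @ [False]) = n" using less.prems w by simp
      ultimately have "stp\<^sup>*\<^sup>* (w' @ [False]) (replicate n False)" using less.hyps by blast
      thus ?thesis unfolding w using stp_exit by (rule converse_rtranclp_into_rtranclp[rotated])
    next
      case False
      obtain j where "j < length w" "w ! j" using True by (auto simp: in_set_conv_nth)
      then obtain X Y where w: "w = X @ True # False # Y" using exists_TF False by blast
      have "pot (X @ False # True # Y) < pot w" unfolding w by (simp add: pot_append)
      moreover have "length (X @ False # True # Y) = n" using less.prems w by simp
      ultimately have "stp\<^sup>*\<^sup>* (X @ False # True # Y) (replicate n False)" using less.hyps by blast
      thus ?thesis unfolding w using stp_hop by (rule converse_rtranclp_into_rtranclp[rotated])
    qed
  qed
qed

lemma reach_hops: "stp\<^sup>*\<^sup>* (replicate j False @ True # replicate m False @ v) (replicate (j + m) False @ True # v)"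
proof (induction m arbitrary: j)
  case 0 thus ?case by simp
next
  case (Suc m)
  have "stp (replicate j False @ True # False # (replicate m False @ v)) (replicate j False @ False # True # (replicate m False @ v))"
    by (rule stp_hop)
  moreover have "replicate j False @ False # True # (replicate m False @ v) = replicate (Suc j) False @ True # replicate m False @ v"
    by (simp add: replicate_append_same[symmetric])
  ultimately show ?case using Suc.IH[of "Suc j"]
    by (auto intro: converse_rtranclp_into_rtranclp)
qed

lemma split_first_True: "True \<in> set u \<Longrightarrow> \<exists>i v. u = replicate i False @ True # v"
proof (induction u)
  case (Cons x u)
  show ?case
  proof (cases x)
    case True thus ?thesis by (metis append_Nil replicate_0)
  next
    case False
    then obtain i v where "u = replicate i False @ True # v" using Cons by auto
    then have "x # u = replicate (Suc i) False @ True # v" using False by simp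
    thus ?thesis by blast
  qed
qed simp

lemma reach_from_zero: "length u = n \<Longrightarrow> stp\<^sup>*\<^sup>* (replicate n False) u"
proof (induction "npart u" arbitrary: u rule: less_induct)
  case less
  show ?case
  proof (cases "True \<in> set u")
    case False
    then have "u = replicate n False" using less.prems
      by (metis (full_types) replicate_length_same)
    thus ?thesis by simp
  next
    case True
    then obtain i v where u: "u = replicate i False @ True # v" using split_first_True by blast
    define u' where "u' = replicate (Suc i) False @ v"
    have "npart u' < npart u" unfolding u u'_def by (simp add: npart_def)
    moreover have "length u' = n" using less.prems unfolding u u'_def by simp
    ultimately have r1: "stp\<^sup>*\<^sup>* (replicate n False) u'" using less.hyps by blast
    have "stp u' (True # replicate i False @ v)" unfolding u'_def using stp_enter by simp
    moreover have "stp\<^sup>*\<^sup>* (True # replicate i False @ v) u"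
      using reach_hops[of 0 i v] unfolding u by simp
    ultimately show ?thesis using r1 by (meson converse_rtranclp_into_rtranclp rtranclp_trans)
  qed
qed

lemma irred: "length t = n \<Longrightarrow> length u = n \<Longrightarrow> stp\<^sup>*\<^sup>* t u"
proof -
  assume a: "length t = n" "length u = n"
  have "stp\<^sup>*\<^sup>* t (replicate n False)" by (rule reach_zero[OF a(1)])
  moreover have "stp\<^sup>*\<^sup>* (replicate n False) u" by (rule reach_from_zero[OF a(2)])
  ultimately show ?thesis by (rule rtranclp_trans)
qed

lemma unique_stat:
  fixes P :: "'a \<Rightarrow> 'a \<Rightarrow> real" and S :: "'a set"
  assumes fin: "finite S" and ne: "S \<noteq> {}"
    and qpos: "\<And>t. t \<in> S \<Longrightarrow> q t > 0"
    and qbal: "\<And>s. s \<in> S \<Longrightarrow> (\<Sum>t\<in>S. q t * P t s) = q s"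
    and prbal: "\<And>s. s \<in> S \<Longrightarrow> (\<Sum>t\<in>S. pr t * P t s) = pr s"
    and Pnn: "\<And>t s. t \<in> S \<Longrightarrow> s \<in> S \<Longrightarrow> P t s \<ge> 0"
    and Rstep: "\<And>t u. R t u \<Longrightarrow> t \<in> S \<Longrightarrow> u \<in> S \<and> P t u > 0"
    and conn: "\<And>t u. t \<in> S \<Longrightarrow> u \<in> S \<Longrightarrow> R\<^sup>*\<^sup>* t u"
  shows "\<exists>c. \<forall>t\<in>S. pr t = c * q t"
proof -
  define c where "c = Max ((\<lambda>t. pr t / q t) ` S)"
  define g where "g t = c * q t - pr t" for t
  have gnn: "g t \<ge> 0" if "t \<in> S" for t
  proof -
    have "pr t / q t \<le> c" unfolding c_def using fin that by (auto intro: Max_ge)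
    thus ?thesis using qpos[OF that] by (simp add: g_def divide_le_eq algebra_simps)
  qed
  have gbal: "(\<Sum>t\<in>S. g t * P t s) = g s" if "s \<in> S" for s
    using qbal[OF that] prbal[OF that]
    by (simp add: g_def algebra_simps sum_subtractf sum_distrib_left[symmetric])
  have "c \<in> (\<lambda>t. pr t / q t) ` S" unfolding c_def using fin ne by (intro Max_in) auto
  then obtain t0 where t0: "t0 \<in> S" "pr t0 / q t0 = c" by auto
  have g0: "g t0 = 0" using t0 qpos[OF t0(1)] by (simp add: g_def field_simps)
  have gz: "R\<^sup>*\<^sup>* t t0 \<Longrightarrow> t \<in> S \<Longrightarrow> g t = 0" for t
  proof (induction rule: converse_rtranclp_induct)
    case base thus ?case using g0 by simp
  next
    case (step t u)
    have uS: "u \<in> S" and Ppos: "P t u > 0" using Rstep[OF step.hyps(1) step.prems] by auto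
    have "g u = 0" using step.IH uS by simp
    then have "(\<Sum>t'\<in>S. g t' * P t' u) = 0" using gbal[OF uS] by simp
    then have "\<forall>t'\<in>S. g t' * P t' u = 0"
      using sum_nonneg_eq_0_iff[OF fin, of "\<lambda>t'. g t' * P t' u"] gnn Pnn uS by auto
    then have "g t * P t u = 0" using step.prems by auto
    thus ?case using Ppos by simp
  qed
  have "\<forall>t\<in>S. pr t = c * q t"
  proof
    fix t assume "t \<in> S"
    then have "g t = 0" using gz conn t0(1) by blast
    thus "pr t = c * q t" by (simp add: g_def)
  qed
  thus ?thesis by blast
qed

lemma out_le1:
  assumes "length t = n" "n \<ge> 1" "0 < \<alpha>" "\<alpha> \<le> 1" "0 < \<beta>" "\<beta> \<le> 1"
  shows "sum_list (map snd (tasep_moves \<alpha> \<beta> t)) \<le> 1"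
proof -
  define e where "e = 1 / real (n + 1)"
  have e0: "e > 0" by (simp add: e_def)
  have s1: "(\<Sum>i<n - 1. if hopC t i then 1 / real (n + 1) else 0) \<le> real (n - 1) * e"
    using sum_bounded_above[of "{..<n - 1}" "\<lambda>i. if hopC t i then 1 / real (n + 1) else (0::real)" e] e0
    by (auto simp: e_def)
  have s2: "(if n \<ge> 1 \<and> \<not> t ! 0 then \<alpha> / real (n + 1) else 0) \<le> e" using assms by (auto simp: e_def divide_right_mono)
  have s3: "(if n \<ge> 1 \<and> t ! (n - 1) then \<beta> / real (n + 1) else 0) \<le> e" using assms by (auto simp: e_def divide_right_mono)
  have "real (n - 1) * e + e + e = 1" using assms by (simp add: e_def of_nat_diff field_simps)
  thus ?thesis unfolding moves_out[OF assms(1)] using s1 s2 s3 by linarith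
qed

lemma P_nonneg:
  assumes "length t = n" "n \<ge> 1" "0 < \<alpha>" "\<alpha> \<le> 1" "0 < \<beta>" "\<beta> \<le> 1"
  shows "tasep_P \<alpha> \<beta> t s \<ge> sum_list (map snd (filter (\<lambda>m. fst m = s) (tasep_moves \<alpha> \<beta> t)))"
    and "sum_list (map snd (filter (\<lambda>m. fst m = s) (tasep_moves \<alpha> \<beta> t))) \<ge> 0"
proof -
  show "sum_list (map snd (filter (\<lambda>m. fst m = s) (tasep_moves \<alpha> \<beta> t))) \<ge> 0"
    by (rule sum_list_nonneg) (use moves_pos[of \<alpha> \<beta> _ t] assms in \<open>auto simp: less_imp_le\<close>)
  show "tasep_P \<alpha> \<beta> t s \<ge> sum_list (map snd (filter (\<lambda>m. fst m = s) (tasep_moves \<alpha> \<beta> t)))"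
    using out_le1[OF assms] unfolding tasep_P_def by auto
qed

lemma P_pos:
  assumes "length t = n" "n \<ge> 1" "0 < \<alpha>" "\<alpha> \<le> 1" "0 < \<beta>" "\<beta> \<le> 1" "stp t u"
  shows "tasep_P \<alpha> \<beta> t u > 0"
proof -
  obtain p where p: "(u, p) \<in> set (tasep_moves \<alpha> \<beta> t)" using stp_moves[OF assms(7)] by blast
  have pp: "p > 0" using moves_pos[OF assms(3,5) p] by simp
  have "p \<in> set (map snd (filter (\<lambda>m. fst m = u) (tasep_moves \<alpha> \<beta> t)))" using p by force
  then have "p \<le> sum_list (map snd (filter (\<lambda>m. fst m = u) (tasep_moves \<alpha> \<beta> t)))"
    by (rule mem_le_sum_list[rotated]) (use moves_pos[of \<alpha> \<beta> _ t] assms in \<open>auto simp: less_imp_le\<close>)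
  thus ?thesis using P_nonneg(1)[OF assms(1-6), of u] pp by linarith
qed

lemma det_A: "det (A_mat \<alpha> \<beta> t k) = hdet (colf (1/\<alpha>) (1/\<beta>) (lam t)) k"
proof -
  define g where "g j d = Fz (1/\<alpha>) (1/\<beta>) (lam t j) (lam t (Suc j)) d" for j d
  have "A_mat \<alpha> \<beta> t k = mat k k (\<lambda>(i,j). g (j+1) (int j - int i))"
    unfolding A_mat_def by (rule eq_matI) (auto simp: A_entry_def g_def Fz_def Tz_def algebra_simps)
  also have "det \<dots> = hdet (\<lambda>j d. g j (int d)) k"
    by (rule hess) (auto simp: g_def Fz_m1 Fz_neg)
  finally show ?thesis by (simp add: g_def colf_def[abs_def])
qed

lemma rho_nil: "rho a b p [] = (\<Sum>c=0..p. a^c * b^(p - c))"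
proof (induction p)
  case 0 thus ?case by (simp add: G_Nil)
next
  case (Suc p)
  have "(\<Sum>c=0..Suc p. a^c * b^(Suc p - c)) = b^(Suc p) + (\<Sum>c=Suc 0..Suc p. a^c * b^(Suc p - c))"
    by (simp add: sum.atLeast_Suc_atMost)
  also have "(\<Sum>c=Suc 0..Suc p. a^c * b^(Suc p - c)) = (\<Sum>c=0..p. a^(Suc c) * b^(Suc p - Suc c))"
    by (rule sum.shift_bounds_cl_Suc_ivl)
  also have "\<dots> = a * (\<Sum>c=0..p. a^c * b^(p - c))"
    by (simp add: sum_distrib_left algebra_simps)
  finally show ?case using Suc G_rep_T[of a b "Suc p"] by simp
qed

lemma Zsum:
  assumes "n \<ge> 1"
  shows "(\<Sum>w\<in>{w. length w = n}. G a b w) = (\<Sum>p=1..n. Bc n p * (\<Sum>c=0..p. a^c * b^(p - c)))"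
proof -
  have "(\<Sum>w\<in>{w. length w = n}. G a b w) = (\<Sum>w\<in>{w. length w = n}. rho a b 0 w)" by simp
  also have "\<dots> = ((Mop ^^ n) (\<lambda>q. rho a b q [])) 0" by (rule Phi_eq)
  also have "\<dots> = (\<Sum>q\<le>n. bb n q * rho a b q [])" by (rule Mop_pow)
  also have "\<dots> = (\<Sum>q\<le>n. Bc n q * rho a b q [])" using bb_closed assms by simp
  also have "\<dots> = (\<Sum>q\<in>{1..n}. Bc n q * rho a b q [])"
    by (rule sum.mono_neutral_right) (auto simp: Bc_def)
  finally show ?thesis by (simp add: rho_nil)
qed

theorem corollary1:
  fixes n k :: nat and \<alpha> \<beta> :: real and \<tau> :: "bool list" and pr :: "bool list \<Rightarrow> real"
  assumes "n \<ge> 1" and "1 \<le> k" and "k \<le> n"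
    and "0 < \<alpha>" and "\<alpha> \<le> 1" and "0 < \<beta>" and "\<beta> \<le> 1"
    and "length \<tau> = n" and "length (filter (\<lambda>x. x) \<tau>) = k"
    and "tasep_stationary n \<alpha> \<beta> pr"
  shows "pr \<tau> = \<alpha> ^ (k + lam \<tau> 1) * \<beta> ^ n / Zn n \<alpha> \<beta> * det (A_mat \<alpha> \<beta> \<tau> k)"
proof -
  note n1 = assms(1) and ab = assms(4-7)
  define a where "a = 1 / \<alpha>"
  define b where "b = 1 / \<beta>"
  have a0: "a > 0" "b > 0" using ab by (auto simp: a_def b_def)
  define q where "q = G a b"
  let ?S = "tasep_states n"
  have Sdef: "?S = {w. length w = n}" by (simp add: tasep_states_def)
  have fin: "finite ?S" by (simp add: Sdef finite_list_length)
  have ne: "?S \<noteq> {}" using Sdef by (metis (mono_tags) empty_iff length_replicate mem_Collect_eq)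
  have qpos: "\<And>t. t \<in> ?S \<Longrightarrow> q t > 0" unfolding q_def using G_pos[OF a0] by blast
  have qbal: "\<And>s. s \<in> ?S \<Longrightarrow> (\<Sum>t\<in>?S. q t * tasep_P \<alpha> \<beta> t s) = q s"
    unfolding q_def a_def b_def using balance[OF _ n1 assms(4) assms(6)] by (simp add: tasep_states_def)
  have st: "(\<forall>t\<in>?S. pr t \<ge> 0) \<and> (\<Sum>t\<in>?S. pr t) = 1 \<and> (\<forall>s\<in>?S. (\<Sum>t\<in>?S. pr t * tasep_P \<alpha> \<beta> t s) = pr s)"
    using assms(10) by (simp add: tasep_stationary_def)
  have Pnn: "\<And>t s. t \<in> ?S \<Longrightarrow> s \<in> ?S \<Longrightarrow> tasep_P \<alpha> \<beta> t s \<ge> 0"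
  proof -
    fix t s assume "t \<in> ?S" "s \<in> ?S"
    then have lt: "length t = n" by (simp add: tasep_states_def)
    show "tasep_P \<alpha> \<beta> t s \<ge> 0" using P_nonneg(1)[OF lt n1 ab, of s] P_nonneg(2)[OF lt n1 ab, of s] by linarith
  qed
  have Rstep: "\<And>t u. stp t u \<Longrightarrow> t \<in> ?S \<Longrightarrow> u \<in> ?S \<and> tasep_P \<alpha> \<beta> t u > 0"
    using P_pos[OF _ n1 ab] stp_len by (auto simp: tasep_states_def)
  have conn: "\<And>t u. t \<in> ?S \<Longrightarrow> u \<in> ?S \<Longrightarrow> stp\<^sup>*\<^sup>* t u"
    using irred by (auto simp: tasep_states_def)
  obtain c where c: "\<forall>t\<in>?S. pr t = c * q t"
    using unique_stat[OF fin ne qpos qbal _ Pnn Rstep conn, of pr] st by blast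
  define Zq where "Zq = (\<Sum>t\<in>?S. q t)"
  have Zqpos: "Zq > 0" unfolding Zq_def using qpos fin ne by (intro sum_pos) auto
  have "1 = (\<Sum>t\<in>?S. c * q t)" using st c by simp
  also have "\<dots> = c * Zq" by (simp add: Zq_def sum_distrib_left)
  finally have cZ: "c = 1 / Zq" using Zqpos by (simp add: field_simps)
  have ZqF: "Zq = (\<Sum>p=1..n. Bc n p * (\<Sum>c=0..p. a^c * b^(p - c)))"
    unfolding Zq_def Sdef q_def by (rule Zsum[OF n1])
  have Zn: "Zn n \<alpha> \<beta> = (\<alpha> * \<beta>)^n * Zq"
    unfolding Zn_def ZqF a_def b_def
    by (rule arg_cong[where f = "\<lambda>x. (\<alpha> * \<beta>)^n * x"], rule sum.cong) (auto simp: Bc_def)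
  have tauS: "\<tau> \<in> ?S" using assms(8) by (simp add: tasep_states_def)
  have np: "npart \<tau> = k" using assms(9) by (simp add: npart_def)
  have zk: "zeros \<tau> + k = n"
    using sum_length_filter_compl[of "\<lambda>x. x" \<tau>] assms(8,9) by (simp add: zeros_def)
  have ln: "k + lam \<tau> 1 + lead \<tau> = n" using lead_lam[of \<tau>] zk by simp
  have alpha_pow: "\<alpha> ^ (k + lam \<tau> 1) = \<alpha> ^ n * a ^ lead \<tau>"
  proof -
    have "\<alpha> ^ n = \<alpha> ^ (k + lam \<tau> 1) * \<alpha> ^ lead \<tau>" using ln by (metis power_add)
    moreover have "\<alpha> ^ lead \<tau> * a ^ lead \<tau> = 1" using ab by (simp add: a_def power_mult_distrib[symmetric])
    ultimately have "\<alpha> ^ n * a ^ lead \<tau> = \<alpha> ^ (k + lam \<tau> 1) * (\<alpha> ^ lead \<tau> * a ^ lead \<tau>)"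
      by (simp only: mult.assoc)
    thus ?thesis using \<open>\<alpha> ^ lead \<tau> * a ^ lead \<tau> = 1\<close> by simp
  qed
  define H where "H = hdet (colf a b (lam \<tau>)) k"
  have qt: "q \<tau> = a ^ lead \<tau> * H" unfolding q_def G_def H_def np ..
  have dA: "det (A_mat \<alpha> \<beta> \<tau> k) = H" unfolding H_def a_def b_def by (rule det_A)
  have "pr \<tau> = q \<tau> / Zq" using c tauS cZ by simp
  also have "\<dots> = \<alpha> ^ (k + lam \<tau> 1) * \<beta> ^ n / Zn n \<alpha> \<beta> * det (A_mat \<alpha> \<beta> \<tau> k)"
  proof -
    have nz: "\<alpha> ^ n \<noteq> 0" "\<beta> ^ n \<noteq> 0" "Zq \<noteq> 0" using ab Zqpos by auto
    have "\<alpha> ^ (k + lam \<tau> 1) * \<beta> ^ n / Zn n \<alpha> \<beta> * det (A_mat \<alpha> \<beta> \<tau> k)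
        = (a ^ lead \<tau> * H) * ((\<alpha> ^ n * \<beta> ^ n) / (\<alpha> ^ n * \<beta> ^ n * Zq))"
      unfolding Zn dA alpha_pow power_mult_distrib by (simp add: algebra_simps)
    also have "(\<alpha> ^ n * \<beta> ^ n) / (\<alpha> ^ n * \<beta> ^ n * Zq) = 1 / Zq" using nz by simp
    finally show ?thesis by (simp add: qt)
  qed
  finally show ?thesis .
qed

end
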